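(* Let $C_0,C_1,C_2$ be the constants of the following fact: for the Square-Root SLOPE estimator $\hat\beta$ (with $A\ge16+4\sqrt2$), for all $\delta\in(0,1]$ and $n_1>\frac{C_0}{\delta^2}s\log(\frac{ep}{s})$, $\sup_{|\beta|_0\le s}\mathbf P_\beta(\|\hat\beta-\beta\|\ge\delta\sigma)\le C_1(\frac{s}{2p})^{C_2s}$. Let $s\le p/2$, $a\le\sigma$, $\delta\in(0,1]$, and assume $$n_1>\frac{C_0}{\delta^2}s\log\Big(\frac{ep}{s}\Big),\qquad n_2\ge\frac{4\sigma^2\log(\frac ps-1)}{a^2}.$$ Let $\hat\eta$ be the selector defined below with threshold $t=t_{\sigma\sqrt{1+\delta^2}}$. Then $$\sup_{\beta\in\Omega^p_{s,a}}\mathbf E_\beta|\hat\eta-\eta_\beta|\le2\sqrt{s(p-s)}\exp\Big(-\frac{n_2}{2}\log\Big(1+\frac{a^2}{4\sigma^2(1+\delta^2)}\Big)\Big)+se^{-n_2/24}+C_1p\Big(\frac{s}{2p}\Big)^{C_2s},$$ $$\sup_{\beta\in\Omega^p_{s,a}}\mathbf P_\beta(\hat\eta\neq\eta_\beta)\le2\sqrt{s(p-s)}\exp\Big(-\frac{n_2}{2}\log\Big(1+\frac{a^2}{4\sigma^2(1+\delta^2)}\Big)\Big)+se^{-n_2/24}+C_1\Big(\frac{s}{2p}\Big)^{C_2s}.$$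
   Context: Model: $Y=X\beta+\sigma\xi\in\mathbb{R}^n$, $X\in\mathbb{R}^{n\times p}$ with i.i.d. $\mathcal N(0,1)$ entries, $\xi\sim\mathcal N(0,\mathbb I_n)$ independent of $X$, $\sigma>0$. $\Omega^p_{s,a}=\{\beta\in\mathbb{R}^p:|\beta|_0\le s,\ |\beta_i|\ge a \text{ whenever }\beta_i\ne0\}$, $\eta_\beta=(\mathbf 1\{\beta_i\neq0\})_{i\le p}$, $|\cdot|$ Hamming distance. The sample is split into disjoint subsamples $(X^{(1)},Y^{(1)})$ of size $n_1$ and $(X^{(2)},Y^{(2)})$ of size $n_2$, $n=n_1+n_2$. $\hat\beta$ is the Square-Root SLOPE estimator on the first subsample: $\hat\beta\in\arg\min_\beta\big(\|Y^{(1)}-X^{(1)}\beta\|/\sqrt{n_1}+2\sum_{j}\lambda_j\beta^*_j\big)$ with $\lambda_j=A\sqrt{\log(2p/j)/n}$ and $\beta^*_1\ge\dots\ge\beta^*_p$ the sorted $|\beta_i|$. The selector: $\hat\eta_i=\mathbf 1\Big\{\frac{|X_i^{(2)\top}(Y^{(2)}-\sum_{j\neq i}X^{(2)}_j\hat\beta_j)|}{\|X^{(2)}_i\|}>t(X^{(2)}_i)\Big\}$, $i=1,\dots,p$, where $X^{(2)}_i$ is the $i$th column of $X^{(2)}$. For $\sigma'>0$, $t_{\sigma'}(u)=\frac{a\|u\|}{2}+\frac{\sigma'^2\log(\frac ps-1)}{a\|u\|}$, $u\in\mathbb{R}^{n_2}$. *)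

theory Defs
  imports "HOL-Probability.Probability"
begin

(* Vectors in R^m are functions nat => real, read on indices {..<m}.
   Matrices are functions nat \<times> nat => real, entry (row i, column j). *)

definition gauss :: "real measure" where
  "gauss = density lborel std_normal_density"

definition model :: "nat \<Rightarrow> nat \<Rightarrow> ((nat \<times> nat \<Rightarrow> real) \<times> (nat \<Rightarrow> real)) measure" where
  "model n p = PiM ({..<n} \<times> {..<p}) (\<lambda>_. gauss) \<Otimes>\<^sub>M PiM {..<n} (\<lambda>_. gauss)"

definition Yv :: "nat \<Rightarrow> real \<Rightarrow> (nat \<Rightarrow> real) \<Rightarrow> (nat \<times> nat \<Rightarrow> real) \<times> (nat \<Rightarrow> real) \<Rightarrow> nat \<Rightarrow> real" where
  "Yv p \<sigma> \<beta> \<omega> i = (\<Sum>j<p. fst \<omega> (i, j) * \<beta> j) + \<sigma> * snd \<omega> i"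

definition vnorm :: "nat \<Rightarrow> (nat \<Rightarrow> real) \<Rightarrow> real" where
  "vnorm m u = sqrt (\<Sum>k<m. (u k)\<^sup>2)"

definition l0 :: "nat \<Rightarrow> (nat \<Rightarrow> real) \<Rightarrow> nat" where
  "l0 p \<beta> = card {j \<in> {..<p}. \<beta> j \<noteq> 0}"

definition sparse :: "nat \<Rightarrow> nat \<Rightarrow> (nat \<Rightarrow> real) \<Rightarrow> bool" where
  "sparse p s \<beta> \<longleftrightarrow> (\<forall>j\<ge>p. \<beta> j = 0) \<and> l0 p \<beta> \<le> s"

definition Omega :: "nat \<Rightarrow> nat \<Rightarrow> real \<Rightarrow> (nat \<Rightarrow> real) set" where
  "Omega p s a = {\<beta>. sparse p s \<beta> \<and> (\<forall>j<p. \<beta> j \<noteq> 0 \<longrightarrow> \<bar>\<beta> j\<bar> \<ge> a)}"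

definition slope_lambda :: "real \<Rightarrow> nat \<Rightarrow> nat \<Rightarrow> nat \<Rightarrow> real" where
  "slope_lambda A n p j = A * sqrt (ln (2 * real p / real j) / real n)"

(* beta^*_1 >= ... >= beta^*_p : the sorted |beta_i|; list index k is beta^*_{k+1} *)
definition sorted_abs :: "nat \<Rightarrow> (nat \<Rightarrow> real) \<Rightarrow> real list" where
  "sorted_abs p b = rev (sort (map (\<lambda>i. \<bar>b i\<bar>) [0..<p]))"

definition sqslope_obj :: "real \<Rightarrow> nat \<Rightarrow> nat \<Rightarrow> nat \<Rightarrow> (nat \<times> nat \<Rightarrow> real) \<Rightarrow> (nat \<Rightarrow> real) \<Rightarrow> (nat \<Rightarrow> real) \<Rightarrow> real" where
  "sqslope_obj A n n1 p X Y b =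
     sqrt (\<Sum>i<n1. (Y i - (\<Sum>j<p. X (i, j) * b j))\<^sup>2) / sqrt (real n1)
     + 2 * (\<Sum>k<p. slope_lambda A n p (k + 1) * (sorted_abs p b ! k))"

definition is_sqslope :: "real \<Rightarrow> nat \<Rightarrow> nat \<Rightarrow> nat \<Rightarrow> (nat \<times> nat \<Rightarrow> real) \<Rightarrow> (nat \<Rightarrow> real) \<Rightarrow> (nat \<Rightarrow> real) \<Rightarrow> bool" where
  "is_sqslope A n n1 p X Y b \<longleftrightarrow> (\<forall>j\<ge>p. b j = 0) \<and>
     (\<forall>c. (\<forall>j\<ge>p. c j = 0) \<longrightarrow> sqslope_obj A n n1 p X Y b \<le> sqslope_obj A n n1 p X Y c)"

definition fit :: "((nat \<times> nat \<Rightarrow> real) \<Rightarrow> (nat \<Rightarrow> real) \<Rightarrow> (nat \<Rightarrow> real)) \<Rightarrow> nat \<Rightarrow> nat \<Rightarrow> real \<Rightarrow> (nat \<Rightarrow> real)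
     \<Rightarrow> (nat \<times> nat \<Rightarrow> real) \<times> (nat \<Rightarrow> real) \<Rightarrow> nat \<Rightarrow> real" where
  "fit est n1 p \<sigma> \<beta> \<omega> = est (\<lambda>(i, j). if i < n1 \<and> j < p then fst \<omega> (i, j) else 0)
                                  (\<lambda>i. if i < n1 then Yv p \<sigma> \<beta> \<omega> i else 0)"

definition tthr :: "real \<Rightarrow> nat \<Rightarrow> nat \<Rightarrow> real \<Rightarrow> nat \<Rightarrow> (nat \<Rightarrow> real) \<Rightarrow> real" where
  "tthr a p s \<sigma>' n2 u = a * vnorm n2 u / 2 + \<sigma>'\<^sup>2 * ln (real p / real s - 1) / (a * vnorm n2 u)"

definition col2 :: "nat \<Rightarrow> (nat \<times> nat \<Rightarrow> real) \<times> (nat \<Rightarrow> real) \<Rightarrow> nat \<Rightarrow> nat \<Rightarrow> real" where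
  "col2 n1 \<omega> i = (\<lambda>k. fst \<omega> (n1 + k, i))"

definition selector :: "((nat \<Rightarrow> real) \<Rightarrow> real) \<Rightarrow> nat \<Rightarrow> nat \<Rightarrow> nat \<Rightarrow> real \<Rightarrow> (nat \<Rightarrow> real) \<Rightarrow> (nat \<Rightarrow> real)
     \<Rightarrow> (nat \<times> nat \<Rightarrow> real) \<times> (nat \<Rightarrow> real) \<Rightarrow> nat \<Rightarrow> bool" where
  "selector t n1 n2 p \<sigma> \<beta> bh \<omega> i \<longleftrightarrow>
     \<bar>\<Sum>k<n2. fst \<omega> (n1 + k, i) *
        (Yv p \<sigma> \<beta> \<omega> (n1 + k) - (\<Sum>j\<in>{..<p} - {i}. fst \<omega> (n1 + k, j) * bh j))\<bar>
       / vnorm n2 (col2 n1 \<omega> i) > t (col2 n1 \<omega> i)"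

definition hamming :: "nat \<Rightarrow> (nat \<Rightarrow> bool) \<Rightarrow> (nat \<Rightarrow> real) \<Rightarrow> nat" where
  "hamming p eta \<beta> = card {i \<in> {..<p}. eta i \<noteq> (\<beta> i \<noteq> 0)}"

end

theory Submission
  imports Defs
begin

lemma gauss_prob[simp]: "prob_space gauss"
  unfolding gauss_def by (rule prob_space_normal_density) simp

lemma sets_gauss[simp, measurable_cong]: "sets gauss = sets borel"
  unfolding gauss_def by simp

lemma space_gauss[simp]: "space gauss = UNIV"
  unfolding gauss_def by simp

lemma nn_integral_normal_density: "0 < \<tau> \<Longrightarrow> (\<integral>\<^sup>+x. ennreal (normal_density \<mu> \<tau> x) \<partial>lborel) = 1"
  by (subst nn_integral_eq_integral) (auto simp: normal_density_nonneg)

lemma normal_shift_ineq: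
  assumes "0 < \<tau>" "0 \<le> x" "x \<le> z"
  shows "normal_density 0 \<tau> z \<le> exp (- x\<^sup>2 / (2*\<tau>\<^sup>2)) * normal_density 0 \<tau> (z - x)"
proof -
  have "- z\<^sup>2 / (2*\<tau>\<^sup>2) \<le> - x\<^sup>2 / (2*\<tau>\<^sup>2) + - (z-x)\<^sup>2 / (2*\<tau>\<^sup>2)"
  proof -
    have "x\<^sup>2 + (z-x)\<^sup>2 \<le> z\<^sup>2" using assms by (simp add: power2_eq_square algebra_simps mult_left_mono)
    thus ?thesis using assms by (simp add: divide_simps)
  qed
  hence "exp (- z\<^sup>2 / (2*\<tau>\<^sup>2)) \<le> exp (- x\<^sup>2 / (2*\<tau>\<^sup>2)) * exp (- (z-x)\<^sup>2 / (2*\<tau>\<^sup>2))"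
    by (simp add: mult_exp_exp)
  thus ?thesis unfolding normal_density_def using assms
    by (simp add: divide_right_mono)
qed

lemma normal_density_sym: "normal_density 0 \<tau> (- z) = normal_density 0 \<tau> z"
  unfolding normal_density_def by simp

lemma normal_tail:
  assumes t: "0 < \<tau>" and x: "0 \<le> x"
  shows "emeasure (density lborel (normal_density 0 \<tau>)) {z. x \<le> \<bar>z\<bar>} \<le> ennreal (exp (- x\<^sup>2 / (2*\<tau>\<^sup>2)))"
proof -
  define e where "e = exp (- x\<^sup>2 / (2*\<tau>\<^sup>2))"
  have e0: "0 \<le> e" by (simp add: e_def)
  have "emeasure (density lborel (normal_density 0 \<tau>)) {z. x \<le> \<bar>z\<bar>}
      = (\<integral>\<^sup>+z. ennreal (normal_density 0 \<tau> z) * indicator {z. x \<le> \<bar>z\<bar>} z \<partial>lborel)"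
    by (subst emeasure_density) auto
  also have "\<dots> \<le> (\<integral>\<^sup>+z. ennreal e * (ennreal (normal_density 0 \<tau> (z - x)) * indicator {x..} z
                  + ennreal (normal_density 0 \<tau> (z + x)) * indicator {..-x} z) \<partial>lborel)"
  proof (rule nn_integral_mono)
    fix z :: real
    show "ennreal (normal_density 0 \<tau> z) * indicator {z. x \<le> \<bar>z\<bar>} z
          \<le> ennreal e * (ennreal (normal_density 0 \<tau> (z - x)) * indicator {x..} z
                  + ennreal (normal_density 0 \<tau> (z + x)) * indicator {..-x} z)"
    proof (cases "x \<le> \<bar>z\<bar>")
      case False thus ?thesis by simp
    next
      case True
      show ?thesis
      proof (cases "x \<le> z")
        case True
        have "normal_density 0 \<tau> z \<le> e * normal_density 0 \<tau> (z - x)"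
          using normal_shift_ineq[OF t x True] by (simp add: e_def)
        hence "ennreal (normal_density 0 \<tau> z) \<le> ennreal e * ennreal (normal_density 0 \<tau> (z - x))"
          by (simp add: ennreal_mult'[symmetric] e0)
        also have "\<dots> \<le> ennreal e * (ennreal (normal_density 0 \<tau> (z - x)) * indicator {x..} z
                  + ennreal (normal_density 0 \<tau> (z + x)) * indicator {..-x} z)"
          using True by (intro mult_left_mono) (auto simp: indicator_def)
        finally show ?thesis using True by simp
      next
        case False
        hence zz: "x \<le> - z" using \<open>x \<le> \<bar>z\<bar>\<close> by auto
        have "normal_density 0 \<tau> (-z) \<le> e * normal_density 0 \<tau> (-z - x)"
          using normal_shift_ineq[OF t x zz] by (simp add: e_def)
        hence "normal_density 0 \<tau> z \<le> e * normal_density 0 \<tau> (z + x)"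
          using normal_density_sym[of \<tau> z] normal_density_sym[of \<tau> "z + x"] by simp
        hence "ennreal (normal_density 0 \<tau> z) \<le> ennreal e * ennreal (normal_density 0 \<tau> (z + x))"
          by (simp add: ennreal_mult'[symmetric] e0)
        also have "\<dots> \<le> ennreal e * (ennreal (normal_density 0 \<tau> (z - x)) * indicator {x..} z
                  + ennreal (normal_density 0 \<tau> (z + x)) * indicator {..-x} z)"
          using zz by (intro mult_left_mono) (auto simp: indicator_def)
        finally show ?thesis using \<open>x \<le> \<bar>z\<bar>\<close> by simp
      qed
    qed
  qed
  also have "\<dots> = ennreal e * ((\<integral>\<^sup>+z. ennreal (normal_density 0 \<tau> (z - x)) * indicator {x..} z \<partial>lborel)
                  + (\<integral>\<^sup>+z. ennreal (normal_density 0 \<tau> (z + x)) * indicator {..-x} z \<partial>lborel))"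
    apply (subst nn_integral_cmult)
     apply simp
    apply (subst nn_integral_add)
      apply auto
    done
  also have "(\<integral>\<^sup>+z. ennreal (normal_density 0 \<tau> (z - x)) * indicator {x..} z \<partial>lborel)
      = (\<integral>\<^sup>+y. ennreal (normal_density 0 \<tau> y) * indicator {0..} y \<partial>lborel)"
    by (subst nn_integral_real_affine[where c=1 and t=x]) (auto intro!: nn_integral_cong simp: indicator_def)
  also have "(\<integral>\<^sup>+z. ennreal (normal_density 0 \<tau> (z + x)) * indicator {..-x} z \<partial>lborel)
      = (\<integral>\<^sup>+y. ennreal (normal_density 0 \<tau> y) * indicator {..0} y \<partial>lborel)"
    by (subst nn_integral_real_affine[where c=1 and t="-x"]) (auto intro!: nn_integral_cong simp: indicator_def)
  also have "(\<integral>\<^sup>+y. ennreal (normal_density 0 \<tau> y) * indicator {0..} y \<partial>lborel)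
           + (\<integral>\<^sup>+y. ennreal (normal_density 0 \<tau> y) * indicator {..0} y \<partial>lborel)
         = (\<integral>\<^sup>+y. ennreal (normal_density 0 \<tau> y) * indicator {0..} y + ennreal (normal_density 0 \<tau> y) * indicator {..0} y \<partial>lborel)"
    by (rule nn_integral_add[symmetric]) auto
  also have "\<dots> = (\<integral>\<^sup>+y. ennreal (normal_density 0 \<tau> y) \<partial>lborel)"
    by (rule nn_integral_cong_AE) (use AE_lborel_singleton[of 0] in \<open>auto elim!: eventually_mono simp: indicator_def\<close>)
  also have "\<dots> = 1" using nn_integral_normal_density[OF t] .
  finally show ?thesis by (simp add: e_def)
qed


lemma gauss_mgf:
  assumes k: "0 \<le> \<kappa>"
  shows "(\<integral>\<^sup>+x. ennreal (exp (- \<kappa> * x\<^sup>2)) \<partial>gauss) = ennreal (1 / sqrt (1 + 2*\<kappa>))"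
proof -
  define c where "c = 1 + 2*\<kappa>"
  have c: "0 < c" using k by (simp add: c_def)
  have eq: "normal_density 0 1 x * exp (- \<kappa> * x\<^sup>2) = (1 / sqrt c) * normal_density 0 (1 / sqrt c) x" for x
  proof -
    have "exp (- x\<^sup>2 / 2) * exp (- \<kappa> * x\<^sup>2) = exp (- (x\<^sup>2 * c) / 2)"
      by (simp add: mult_exp_exp c_def field_simps)
    moreover have "1 / sqrt (2 * pi * (1 / sqrt c)\<^sup>2) = sqrt c / sqrt (2*pi)"
      using c by (simp add: power_divide real_sqrt_divide real_sqrt_mult)
    ultimately show ?thesis using c
      by (simp add: normal_density_def power_divide field_simps)
  qed
  have "(\<integral>\<^sup>+x. ennreal (exp (- \<kappa> * x\<^sup>2)) \<partial>gauss)
     = (\<integral>\<^sup>+x. ennreal (normal_density 0 1 x) * ennreal (exp (- \<kappa> * x\<^sup>2)) \<partial>lborel)"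
    unfolding gauss_def by (subst nn_integral_density) auto
  also have "\<dots> = (\<integral>\<^sup>+x. ennreal (1 / sqrt c) * ennreal (normal_density 0 (1 / sqrt c) x) \<partial>lborel)"
  proof (intro nn_integral_cong)
    fix x
    have "ennreal (normal_density 0 1 x) * ennreal (exp (- \<kappa> * x\<^sup>2)) = ennreal (normal_density 0 1 x * exp (- \<kappa> * x\<^sup>2))"
      by (simp add: ennreal_mult)
    also have "\<dots> = ennreal (1 / sqrt c * normal_density 0 (1 / sqrt c) x)" using eq by simp
    also have "\<dots> = ennreal (1 / sqrt c) * ennreal (normal_density 0 (1 / sqrt c) x)"
      using c by (subst ennreal_mult'[symmetric]) auto
    finally show "ennreal (normal_density 0 1 x) * ennreal (exp (- \<kappa> * x\<^sup>2)) = ennreal (1 / sqrt c) * ennreal (normal_density 0 (1 / sqrt c) x)" .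
  qed
  also have "\<dots> = ennreal (1 / sqrt c)"
    using c by (subst nn_integral_cmult) (auto simp: nn_integral_normal_density)
  finally show ?thesis by (simp add: c_def)
qed

lemma gauss_comp: "m \<in> I \<Longrightarrow> distr (PiM I (\<lambda>_. gauss)) gauss (\<lambda>z. z m) = gauss"
  by (rule distr_PiM_component) auto

lemma indep_coords:
  assumes "finite I" "I \<noteq> {}"
  shows "prob_space.indep_vars (PiM I (\<lambda>_. gauss)) (\<lambda>_. gauss) (\<lambda>m z. z m) I"
proof -
  interpret P: prob_space "PiM I (\<lambda>_. gauss)" by (rule prob_space_PiM) simp
  show ?thesis
  proof (subst P.indep_vars_iff_distr_eq_PiM')
    show "I \<noteq> {}" by fact
    show "(\<lambda>z. z i) \<in> measurable (PiM I (\<lambda>_. gauss)) gauss" if "i \<in> I" for i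
      by (rule measurable_component_singleton[OF that])
    have "distr (PiM I (\<lambda>_. gauss)) (PiM I (\<lambda>_. gauss)) (\<lambda>x. \<lambda>i\<in>I. x i)
        = distr (PiM I (\<lambda>_. gauss)) (PiM I (\<lambda>_. gauss)) (\<lambda>x. x)"
      by (rule distr_cong) (auto simp: space_PiM)
    also have "\<dots> = PiM I (\<lambda>_. gauss)" by simp
    also have "\<dots> = PiM I (\<lambda>i. distr (PiM I (\<lambda>_. gauss)) gauss (\<lambda>z. z i))"
      by (rule PiM_cong) (auto simp: gauss_comp)
    finally show "distr (PiM I (\<lambda>_. gauss)) (PiM I (\<lambda>_. gauss)) (\<lambda>x. \<lambda>i\<in>I. x i)
        = PiM I (\<lambda>i. distr (PiM I (\<lambda>_. gauss)) gauss (\<lambda>z. z i))" .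
  qed
qed

lemma lincomb_normal:
  assumes fin: "finite J" and pos: "0 < (\<Sum>m\<in>J. (w m)\<^sup>2)"
  shows "distributed (PiM J (\<lambda>_. gauss)) lborel (\<lambda>z. \<Sum>m\<in>J. w m * z m)
           (normal_density 0 (sqrt (\<Sum>m\<in>J. (w m)\<^sup>2)))"
proof -
  interpret P: prob_space "PiM J (\<lambda>_. gauss)" by (rule prob_space_PiM) simp
  define J' where "J' = {m\<in>J. w m \<noteq> 0}"
  have fin': "finite J'" using fin by (simp add: J'_def)
  have sub: "J' \<subseteq> J" by (auto simp: J'_def)
  have ne: "J' \<noteq> {}"
  proof
    assume "J' = {}"
    hence "\<forall>m\<in>J. w m = 0" by (auto simp: J'_def)
    thus False using pos by simp
  qed
  have s1: "(\<Sum>m\<in>J. w m * z m) = (\<Sum>m\<in>J'. w m * z m)" for z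
    by (rule sum.mono_neutral_right[OF fin sub]) (auto simp: J'_def)
  have s2: "(\<Sum>m\<in>J. (w m)\<^sup>2) = (\<Sum>m\<in>J'. (w m)\<^sup>2)"
    by (rule sum.mono_neutral_right[OF fin sub]) (auto simp: J'_def)
  have ind0: "P.indep_vars (\<lambda>_. gauss) (\<lambda>m z. z m) J'"
    using P.indep_vars_subset[OF indep_coords[OF fin] sub] ne sub by blast
  have ind: "P.indep_vars (\<lambda>_. borel) (\<lambda>m z. w m * z m) J'"
    by (rule P.indep_vars_compose2[OF ind0, where Y="\<lambda>m t. w m * t", simplified])
       (simp add: measurable_cong_sets[OF sets_gauss refl])
  have base: "distributed (PiM J (\<lambda>_. gauss)) lborel (\<lambda>z. z m) (normal_density 0 1)" if "m \<in> J" for m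
  proof -
    have "distr (PiM J (\<lambda>_. gauss)) lborel (\<lambda>z. z m) = distr (PiM J (\<lambda>_. gauss)) gauss (\<lambda>z. z m)"
      by (rule distr_cong) auto
    also have "\<dots> = gauss" using that by (simp add: gauss_comp)
    finally show ?thesis unfolding distributed_def gauss_def using that by auto
  qed
  have dist: "distributed (PiM J (\<lambda>_. gauss)) lborel (\<lambda>z. w m * z m) (normal_density 0 (\<bar>w m\<bar>))" if "m \<in> J'" for m
    using P.normal_density_affine[OF base, of m "w m" 0] that by (auto simp: J'_def)
  have "distributed (PiM J (\<lambda>_. gauss)) lborel (\<lambda>x. \<Sum>m\<in>J'. w m * x m)
          (normal_density (\<Sum>m\<in>J'. 0) (sqrt (\<Sum>m\<in>J'. \<bar>w m\<bar>\<^sup>2)))"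
    by (rule P.sum_indep_normal[OF fin' ne ind _ dist]) (auto simp: J'_def)
  thus ?thesis by (simp add: s1 s2)
qed

lemma lincomb_tail:
  assumes fin: "finite J" and pos: "0 < (\<Sum>m\<in>J. (w m)\<^sup>2)" and x: "0 \<le> x"
  shows "emeasure (PiM J (\<lambda>_. gauss)) {z \<in> space (PiM J (\<lambda>_. gauss)). x \<le> \<bar>\<Sum>m\<in>J. w m * z m\<bar>}
           \<le> ennreal (exp (- x\<^sup>2 / (2 * (\<Sum>m\<in>J. (w m)\<^sup>2))))"
proof -
  let ?P = "PiM J (\<lambda>_. gauss)"
  let ?S = "\<lambda>z. \<Sum>m\<in>J. w m * z m"
  let ?v = "\<Sum>m\<in>J. (w m)\<^sup>2"
  have D: "distributed ?P lborel ?S (normal_density 0 (sqrt ?v))"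
    by (rule lincomb_normal[OF fin pos])
  have Sm: "?S \<in> measurable ?P lborel" using D by (simp add: distributed_def)
  have Bs: "{y::real. x \<le> \<bar>y\<bar>} \<in> sets lborel" by simp
  have "{z \<in> space ?P. x \<le> \<bar>?S z\<bar>} = ?S -` {y. x \<le> \<bar>y\<bar>} \<inter> space ?P" by auto
  hence "emeasure ?P {z \<in> space ?P. x \<le> \<bar>?S z\<bar>} = emeasure (distr ?P lborel ?S) {y. x \<le> \<bar>y\<bar>}"
    by (simp add: emeasure_distr[OF Sm Bs])
  also have "\<dots> = emeasure (density lborel (normal_density 0 (sqrt ?v))) {y. x \<le> \<bar>y\<bar>}"
    using D by (simp add: distributed_def)
  also have "\<dots> \<le> ennreal (exp (- x\<^sup>2 / (2 * (sqrt ?v)\<^sup>2)))"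
    by (rule normal_tail) (use pos x in auto)
  also have "(sqrt ?v)\<^sup>2 = ?v" using pos by simp
  finally show ?thesis .
qed


interpretation GP: product_sigma_finite "(\<lambda>_. gauss)"
  unfolding product_sigma_finite_def
  by (auto intro: prob_space_imp_sigma_finite)

definition sumsplit :: "'a set \<Rightarrow> 'b set \<Rightarrow> ('a + 'b \<Rightarrow> real) \<Rightarrow> ('a \<Rightarrow> real) \<times> ('b \<Rightarrow> real)" where
  "sumsplit I1 I2 h = ((\<lambda>x\<in>I1. h (Inl x)), (\<lambda>x\<in>I2. h (Inr x)))"

lemma sumsplit_measurable[measurable]:
  "sumsplit I1 I2 \<in> measurable (PiM (Inl`I1 \<union> Inr`I2) (\<lambda>_. gauss)) (PiM I1 (\<lambda>_. gauss) \<Otimes>\<^sub>M PiM I2 (\<lambda>_. gauss))"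
  unfolding sumsplit_def
  by (intro measurable_Pair measurable_restrict measurable_component_singleton) auto

lemma sumsplit_distr:
  fixes I1 :: "'a set" and I2 :: "'b set"
  assumes "finite I1" "finite I2"
  shows "distr (PiM (Inl`I1 \<union> Inr`I2) (\<lambda>_. gauss)) (PiM I1 (\<lambda>_. gauss) \<Otimes>\<^sub>M PiM I2 (\<lambda>_. gauss)) (sumsplit I1 I2)
       = PiM I1 (\<lambda>_. gauss) \<Otimes>\<^sub>M PiM I2 (\<lambda>_. gauss)"
proof -
  let ?A = "PiM (Inl`I1 :: ('a+'b) set) (\<lambda>_. gauss) \<Otimes>\<^sub>M PiM (Inr`I2 :: ('a+'b) set) (\<lambda>_. gauss)"
  let ?S = "Inl`I1 \<union> Inr`I2"
  let ?T = "PiM I1 (\<lambda>_. gauss) \<Otimes>\<^sub>M PiM I2 (\<lambda>_. gauss)"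
  let ?R1 = "\<lambda>g::('a+'b \<Rightarrow> real). (\<lambda>x\<in>I1. g (Inl x))"
  let ?R2 = "\<lambda>g::('a+'b \<Rightarrow> real). (\<lambda>x\<in>I2. g (Inr x))"
  have disj: "Inl`I1 \<inter> Inr`I2 = {}" by auto
  have fin: "finite (Inl`I1)" "finite (Inr`I2)" using assms by auto
  have "PiM ?S (\<lambda>_. gauss) = distr ?A (PiM ?S (\<lambda>_. gauss)) (merge (Inl`I1) (Inr`I2))"
    by (rule GP.distr_merge[OF disj fin, symmetric])
  hence "distr (PiM ?S (\<lambda>_. gauss)) ?T (sumsplit I1 I2)
       = distr (distr ?A (PiM ?S (\<lambda>_. gauss)) (merge (Inl`I1) (Inr`I2))) ?T (sumsplit I1 I2)"
    by simp
  also have "\<dots> = distr ?A ?T (sumsplit I1 I2 \<circ> merge (Inl`I1) (Inr`I2))"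
    by (rule distr_distr) (auto intro: measurable_merge)
  also have "\<dots> = distr ?A ?T (\<lambda>(g, h). (?R1 g, ?R2 h))"
    apply (rule distr_cong[OF refl refl])
    apply (auto simp: sumsplit_def merge_def space_pair_measure fun_eq_iff)
    done
  also have "\<dots> = distr (PiM (Inl`I1) (\<lambda>_. gauss)) (PiM I1 (\<lambda>_. gauss)) ?R1
              \<Otimes>\<^sub>M distr (PiM (Inr`I2) (\<lambda>_. gauss)) (PiM I2 (\<lambda>_. gauss)) ?R2"
  proof (rule pair_measure_distr[symmetric])
    show "?R1 \<in> measurable (PiM (Inl`I1) (\<lambda>_. gauss)) (PiM I1 (\<lambda>_. gauss))"
      by (intro measurable_restrict measurable_component_singleton) auto
    show "?R2 \<in> measurable (PiM (Inr`I2) (\<lambda>_. gauss)) (PiM I2 (\<lambda>_. gauss))"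
      by (intro measurable_restrict measurable_component_singleton) auto
    have "distr (PiM (Inr`I2) (\<lambda>_. gauss)) (PiM I2 (\<lambda>_. gauss)) ?R2 = PiM I2 (\<lambda>_. gauss)"
      using distr_PiM_reindex[of "Inr`I2" "\<lambda>_. gauss" Inr I2] by auto
    thus "sigma_finite_measure (distr (PiM (Inr`I2) (\<lambda>_. gauss)) (PiM I2 (\<lambda>_. gauss)) ?R2)"
      by (simp add: prob_space_imp_sigma_finite prob_space_PiM)
  qed
  also have "distr (PiM (Inl`I1) (\<lambda>_. gauss)) (PiM I1 (\<lambda>_. gauss)) ?R1 = PiM I1 (\<lambda>_. gauss)"
    using distr_PiM_reindex[of "Inl`I1" "\<lambda>_. gauss" Inl I1] by auto
  also have "distr (PiM (Inr`I2) (\<lambda>_. gauss)) (PiM I2 (\<lambda>_. gauss)) ?R2 = PiM I2 (\<lambda>_. gauss)"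
    using distr_PiM_reindex[of "Inr`I2" "\<lambda>_. gauss" Inr I2] by auto
  finally show ?thesis .
qed


lemma det_fp:
  fixes N a sp L v t :: real
  assumes N: "0 < N" and a: "0 < a" and v: "0 < v" "v \<le> sp" and L: "0 \<le> L"
    and t: "t = a * N / 2 + sp * L / (a * N)"
  shows "exp (- (t * N)\<^sup>2 / (2 * (N\<^sup>2 * v))) \<le> exp (- L / 2) * exp (- (a\<^sup>2 / (8 * sp)) * N\<^sup>2)"
proof -
  have sp: "0 < sp" using v by simp
  define A where "A = a * N / 2"
  define B where "B = sp * L / (a * N)"
  have A0: "0 \<le> A" and B0: "0 \<le> B" using N a L sp by (auto simp: A_def B_def)
  have AB: "2 * A * B = sp * L" using N a by (simp add: A_def B_def field_simps)
  have tt: "t = A + B" by (simp add: t A_def B_def)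
  have "(t * N)\<^sup>2 / (2 * (N\<^sup>2 * v)) = t\<^sup>2 / (2 * v)" using N by (simp add: power_mult_distrib field_simps)
  also have "\<dots> \<ge> t\<^sup>2 / (2 * sp)" using v sp by (intro divide_left_mono) auto
  finally have 1: "t\<^sup>2 / (2 * sp) \<le> (t * N)\<^sup>2 / (2 * (N\<^sup>2 * v))" .
  have "A\<^sup>2 + 2 * A * B \<le> t\<^sup>2" using tt A0 B0 by (simp add: power2_eq_square algebra_simps)
  hence "(A\<^sup>2 + sp * L) / (2 * sp) \<le> t\<^sup>2 / (2 * sp)" using AB sp by (intro divide_right_mono) auto
  moreover have "(A\<^sup>2 + sp * L) / (2 * sp) = L/2 + (a\<^sup>2 / (8 * sp)) * N\<^sup>2"
    using sp by (simp add: A_def power_mult_distrib field_simps)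
  ultimately have "L/2 + (a\<^sup>2 / (8 * sp)) * N\<^sup>2 \<le> (t * N)\<^sup>2 / (2 * (N\<^sup>2 * v))" using 1 by linarith
  thus ?thesis by (simp add: mult_exp_exp)
qed

lemma det_fn:
  fixes N a sp L v t :: real
  assumes N: "0 < N" and a: "0 < a" and v: "0 < v" "v \<le> sp" and L: "0 \<le> L"
    and t: "t = a * N / 2 + sp * L / (a * N)" and pos: "0 < a * N - t"
  shows "exp (- (N * (a * N - t))\<^sup>2 / (2 * (N\<^sup>2 * v))) \<le> exp (L / 2) * exp (- (a\<^sup>2 / (8 * sp)) * N\<^sup>2)"
proof -
  have sp: "0 < sp" using v by simp
  define A where "A = a * N / 2"
  define B where "B = sp * L / (a * N)"
  have AB: "2 * A * B = sp * L" using N a by (simp add: A_def B_def field_simps)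
  have tt: "a * N - t = A - B" by (simp add: t A_def B_def)
  have "(N * (a * N - t))\<^sup>2 / (2 * (N\<^sup>2 * v)) = (N\<^sup>2 * (a * N-t)\<^sup>2) / (N\<^sup>2 * (2 * v))"
    by (simp add: power_mult_distrib mult_ac)
  also have "\<dots> = (a * N-t)\<^sup>2 / (2 * v)" using N by simp
  also have "\<dots> \<ge> (a * N-t)\<^sup>2 / (2 * sp)" using v sp by (intro divide_left_mono) auto
  finally have 1: "(a * N-t)\<^sup>2 / (2 * sp) \<le> (N * (a * N - t))\<^sup>2 / (2 * (N\<^sup>2 * v))" .
  have "A\<^sup>2 - 2 * A * B \<le> (a * N-t)\<^sup>2" unfolding tt by (simp add: power2_eq_square algebra_simps)
  hence "(A\<^sup>2 - sp * L) / (2 * sp) \<le> (a * N-t)\<^sup>2 / (2 * sp)" using AB sp by (intro divide_right_mono) auto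
  moreover have "(A\<^sup>2 - sp * L) / (2 * sp) = - L/2 + (a\<^sup>2 / (8 * sp)) * N\<^sup>2"
    using sp by (simp add: A_def power_mult_distrib field_simps)
  ultimately have "- L/2 + (a\<^sup>2 / (8 * sp)) * N\<^sup>2 \<le> (N * (a * N - t))\<^sup>2 / (2 * (N\<^sup>2 * v))" using 1 by linarith
  thus ?thesis by (simp add: mult_exp_exp)
qed

lemma det_fn_triv:
  fixes N a sp L t :: real
  assumes N: "0 \<le> N" and a: "0 < a" and sp: "0 < sp" and L: "0 \<le> L"
    and t: "t = a * N / 2 + sp * L / (a * N)" and npos: "\<not> 0 < a * N - t"
  shows "1 \<le> exp (L / 2) * exp (- (a\<^sup>2 / (8 * sp)) * N\<^sup>2)"
proof (cases "N = 0")
  case True thus ?thesis using L by simp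
next
  case False
  hence N: "0 < N" using N by simp
  have "a * N / 2 \<le> sp * L / (a * N)"
  proof -
    define q where "q = a * N"
    define B where "B = sp * L / (a * N)"
    have "\<not> 0 < q - t" "t = q / 2 + B" using npos t by (simp_all add: q_def B_def)
    hence "q / 2 \<le> B" by linarith
    thus ?thesis by (simp add: q_def B_def)
  qed
  hence "(a * N)\<^sup>2 \<le> 2 * sp * L" using N a by (simp add: field_simps power2_eq_square)
  hence "(a\<^sup>2 / (8 * sp)) * N\<^sup>2 \<le> L / 4" using sp by (simp add: field_simps power_mult_distrib)
  hence "0 \<le> L/2 + - (a\<^sup>2 / (8 * sp)) * N\<^sup>2" using L by linarith
  thus ?thesis by (simp add: mult_exp_exp)
qed

lemma num_decomp:
  fixes Xf :: "nat \<Rightarrow> nat \<Rightarrow> real"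
  assumes i: "i < p"
  shows "(\<Sum>k<n2. Xf k i * ((\<Sum>j<p. Xf k j * \<beta> j) + \<sigma> * \<xi>f k - (\<Sum>j\<in>{..<p}-{i}. Xf k j * d j)))
    = \<beta> i * (\<Sum>k<n2. (Xf k i)\<^sup>2) + ((\<Sum>k<n2. \<Sum>j\<in>{..<p}-{i}. (Xf k i * (\<beta> j - d j)) * Xf k j)
       + (\<Sum>k<n2. (\<sigma> * Xf k i) * \<xi>f k))"
proof -
  have s: "(\<Sum>j<p. Xf k j * \<beta> j) = Xf k i * \<beta> i + (\<Sum>j\<in>{..<p}-{i}. Xf k j * \<beta> j)" for k
    using i by (subst sum.remove[of _ i]) auto
  have "(\<Sum>k<n2. Xf k i * ((\<Sum>j<p. Xf k j * \<beta> j) + \<sigma> * \<xi>f k - (\<Sum>j\<in>{..<p}-{i}. Xf k j * d j)))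
     = (\<Sum>k<n2. \<beta> i * (Xf k i)\<^sup>2 + ((\<Sum>j\<in>{..<p}-{i}. (Xf k i * (\<beta> j - d j)) * Xf k j) + (\<sigma> * Xf k i) * \<xi>f k))"
  proof (intro sum.cong refl)
    fix k
    have "Xf k i * ((\<Sum>j<p. Xf k j * \<beta> j) + \<sigma> * \<xi>f k - (\<Sum>j\<in>{..<p}-{i}. Xf k j * d j))
      = Xf k i * (Xf k i * \<beta> i + (\<Sum>j\<in>{..<p}-{i}. Xf k j * \<beta> j - Xf k j * d j) + \<sigma> * \<xi>f k)"
      by (simp only: s) (simp add: sum_subtractf algebra_simps)
    also have "\<dots> = \<beta> i * (Xf k i)\<^sup>2 + ((\<Sum>j\<in>{..<p}-{i}. (Xf k i * (\<beta> j - d j)) * Xf k j) + (\<sigma> * Xf k i) * \<xi>f k)"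
      by (simp add: sum_distrib_left algebra_simps power2_eq_square)
    finally show "Xf k i * ((\<Sum>j<p. Xf k j * \<beta> j) + \<sigma> * \<xi>f k - (\<Sum>j\<in>{..<p}-{i}. Xf k j * d j))
      = \<beta> i * (Xf k i)\<^sup>2 + ((\<Sum>j\<in>{..<p}-{i}. (Xf k i * (\<beta> j - d j)) * Xf k j) + (\<sigma> * Xf k i) * \<xi>f k)" .
  qed
  also have "\<dots> = \<beta> i * (\<Sum>k<n2. (Xf k i)\<^sup>2) + ((\<Sum>k<n2. \<Sum>j\<in>{..<p}-{i}. (Xf k i * (\<beta> j - d j)) * Xf k j)
       + (\<Sum>k<n2. (\<sigma> * Xf k i) * \<xi>f k))"
    by (simp add: sum.distrib sum_distrib_left)
  finally show ?thesis .
qed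


definition IX :: "nat \<Rightarrow> nat \<Rightarrow> (nat \<times> nat) set" where "IX n p = {..<n} \<times> {..<p}"
definition F1 :: "nat \<Rightarrow> nat \<Rightarrow> ((nat \<times> nat) + nat) set" where
  "F1 n1 p = Inl ` ({..<n1} \<times> {..<p}) \<union> Inr ` {..<n1}"
definition UU :: "nat \<Rightarrow> nat \<Rightarrow> nat \<Rightarrow> ((nat \<times> nat) + nat) set" where
  "UU n1 n2 i = (\<lambda>k. Inl (n1 + k, i)) ` {..<n2}"
definition JJ :: "nat \<Rightarrow> nat \<Rightarrow> nat \<Rightarrow> nat \<Rightarrow> ((nat \<times> nat) + nat) set" where
  "JJ n1 n2 p i = (\<lambda>(k, j). Inl (n1 + k, j)) ` ({..<n2} \<times> ({..<p} - {i})) \<union> (\<lambda>k. Inr (n1 + k)) ` {..<n2}"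

lemma fin_sets[simp]: "finite (F1 n1 p)" "finite (UU n1 n2 i)" "finite (JJ n1 n2 p i)" "finite (IX n p)"
  by (auto simp: F1_def UU_def JJ_def IX_def)

lemma split_sets:
  assumes i: "i < p"
  shows "Inl ` IX (n1 + n2) p \<union> Inr ` {..<n1 + n2} = (F1 n1 p \<union> UU n1 n2 i) \<union> JJ n1 n2 p i"
    and "(F1 n1 p \<union> UU n1 n2 i) \<inter> JJ n1 n2 p i = {}"
proof -
  show "(F1 n1 p \<union> UU n1 n2 i) \<inter> JJ n1 n2 p i = {}"
    by (auto simp: F1_def UU_def JJ_def)
  show "Inl ` IX (n1 + n2) p \<union> Inr ` {..<n1 + n2} = (F1 n1 p \<union> UU n1 n2 i) \<union> JJ n1 n2 p i"
  proof
    show "(F1 n1 p \<union> UU n1 n2 i) \<union> JJ n1 n2 p i \<subseteq> Inl ` IX (n1 + n2) p \<union> Inr ` {..<n1 + n2}"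
      using i by (auto simp: F1_def UU_def JJ_def IX_def)
    show "Inl ` IX (n1 + n2) p \<union> Inr ` {..<n1 + n2} \<subseteq> (F1 n1 p \<union> UU n1 n2 i) \<union> JJ n1 n2 p i"
    proof
      fix m assume m: "m \<in> Inl ` IX (n1 + n2) p \<union> Inr ` {..<n1 + n2}"
      show "m \<in> (F1 n1 p \<union> UU n1 n2 i) \<union> JJ n1 n2 p i"
      proof (cases m)
        case (Inl x)
        then obtain r j where x: "m = Inl (r, j)" "r < n1 + n2" "j < p" using m by (auto simp: IX_def)
        show ?thesis
        proof (cases "r < n1")
          case True thus ?thesis using x by (auto simp: F1_def)
        next
          case False
          then obtain k where k: "r = n1 + k" "k < n2" using x by (metis add_less_cancel_left le_iff_add not_less)
          show ?thesis
          proof (cases "j = i")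
            case True thus ?thesis using x k by (auto simp: UU_def)
          next
            case False
            hence "(k, j) \<in> {..<n2} \<times> ({..<p} - {i})" using k x by auto
            hence "Inl (n1 + k, j) \<in> JJ n1 n2 p i" unfolding JJ_def by (intro UnI1 image_eqI[where x="(k,j)"]) auto
            thus ?thesis using x k by auto
          qed
        qed
      next
        case (Inr r)
        hence r: "r < n1 + n2" using m by auto
        show ?thesis
        proof (cases "r < n1")
          case True thus ?thesis using Inr by (auto simp: F1_def)
        next
          case False
          then obtain k where k: "r = n1 + k" "k < n2" using r by (metis add_less_cancel_left le_iff_add not_less)
          thus ?thesis using Inr by (auto simp: JJ_def)
        qed
      qed
    qed
  qed
qed

lemma sum_JJ:
  "(\<Sum>m\<in>JJ n1 n2 p i. g m) = (\<Sum>k<n2. \<Sum>j\<in>{..<p}-{i}. g (Inl (n1 + k, j))) + (\<Sum>k<n2. g (Inr (n1 + k)))"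
proof -
  have inj1: "inj_on (\<lambda>(k, j). Inl (n1 + k, j) :: (nat\<times>nat)+nat) ({..<n2} \<times> ({..<p} - {i}))"
    by (auto simp: inj_on_def)
  have inj2: "inj_on (\<lambda>k. Inr (n1 + k) :: (nat\<times>nat)+nat) {..<n2}" by (auto simp: inj_on_def)
  have "(\<Sum>m\<in>JJ n1 n2 p i. g m) = (\<Sum>m\<in>(\<lambda>(k, j). Inl (n1 + k, j)) ` ({..<n2} \<times> ({..<p} - {i})). g m)
        + (\<Sum>m\<in>(\<lambda>k. Inr (n1 + k)) ` {..<n2}. g m)"
    unfolding JJ_def by (rule sum.union_disjoint) auto
  also have "(\<Sum>m\<in>(\<lambda>(k, j). Inl (n1 + k, j)) ` ({..<n2} \<times> ({..<p} - {i})). g m)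
      = (\<Sum>(k,j)\<in>{..<n2} \<times> ({..<p} - {i}). g (Inl (n1 + k, j)))"
    by (subst sum.reindex[OF inj1]) (simp add: case_prod_unfold)
  also have "\<dots> = (\<Sum>k<n2. \<Sum>j\<in>{..<p}-{i}. g (Inl (n1 + k, j)))"
    by (subst sum.cartesian_product[symmetric]) simp
  also have "(\<Sum>m\<in>(\<lambda>k. Inr (n1 + k)) ` {..<n2}. g m) = (\<Sum>k<n2. g (Inr (n1 + k)))"
    by (subst sum.reindex[OF inj2]) simp
  finally show ?thesis .
qed

lemma prod_UU:
  "(\<Prod>m\<in>UU n1 n2 i. g m) = (\<Prod>k<n2. g (Inl (n1 + k, i)))"
  unfolding UU_def by (subst prod.reindex) (auto simp: inj_on_def)

lemma card_UU: "card (UU n1 n2 i) = n2"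
  unfolding UU_def by (subst card_image) (auto simp: inj_on_def)


abbreviation "ss n1 n2 p \<equiv> sumsplit (IX (n1 + n2) p) {..<n1 + n2}"
abbreviation "mg n1 n2 p i y z \<equiv> merge (F1 n1 p \<union> UU n1 n2 i) (JJ n1 n2 p i) (y, z)"

lemma eval1: "r < n1 \<Longrightarrow> j < p \<Longrightarrow> fst (ss n1 n2 p (mg n1 n2 p i y z)) (r, j) = y (Inl (r, j))"
  by (simp add: sumsplit_def merge_def IX_def F1_def)
lemma eval2: "r < n1 \<Longrightarrow> snd (ss n1 n2 p (mg n1 n2 p i y z)) r = y (Inr r)"
  by (simp add: sumsplit_def merge_def IX_def F1_def)
lemma eval3: "k < n2 \<Longrightarrow> i < p \<Longrightarrow> fst (ss n1 n2 p (mg n1 n2 p i y z)) (n1 + k, i) = y (Inl (n1 + k, i))"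
  by (simp add: sumsplit_def merge_def IX_def UU_def)
lemma eval4: "k < n2 \<Longrightarrow> j < p \<Longrightarrow> j \<noteq> i \<Longrightarrow> fst (ss n1 n2 p (mg n1 n2 p i y z)) (n1 + k, j) = z (Inl (n1 + k, j))"
proof -
  assume a: "k < n2" "j < p" "j \<noteq> i"
  have "Inl (n1 + k, j) \<notin> F1 n1 p \<union> UU n1 n2 i" using a by (auto simp: F1_def UU_def)
  moreover have "Inl (n1 + k, j) \<in> JJ n1 n2 p i" using a unfolding JJ_def
    by (intro UnI1 image_eqI[where x="(k,j)"]) auto
  ultimately show ?thesis using a by (simp add: sumsplit_def merge_def IX_def)
qed
lemma eval5: "k < n2 \<Longrightarrow> snd (ss n1 n2 p (mg n1 n2 p i y z)) (n1 + k) = z (Inr (n1 + k))"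
proof -
  assume a: "k < n2"
  have "Inr (n1 + k) \<notin> F1 n1 p \<union> UU n1 n2 i" using a by (auto simp: F1_def UU_def)
  moreover have "Inr (n1 + k) \<in> JJ n1 n2 p i" using a unfolding JJ_def by auto
  ultimately show ?thesis using a by (simp add: sumsplit_def merge_def)
qed


lemma coord_bound:
  fixes bh :: "(nat \<times> nat \<Rightarrow> real) \<times> (nat \<Rightarrow> real) \<Rightarrow> nat \<Rightarrow> real" and \<beta> :: "nat \<Rightarrow> real"
    and n1 n2 p s i :: nat and \<sigma> \<delta> a :: real
  defines "M \<equiv> model (n1 + n2) p"
  defines "sp \<equiv> (\<sigma> * sqrt (1 + \<delta>\<^sup>2))\<^sup>2"
  defines "L \<equiv> ln (real p / real s - 1)"
  defines "A \<equiv> {\<omega> \<in> space M. (selector (tthr a p s (\<sigma> * sqrt (1 + \<delta>\<^sup>2)) n2) n1 n2 p \<sigma> \<beta> (bh \<omega>) \<omega> i \<noteq> (\<beta> i \<noteq> 0))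
                  \<and> vnorm p (\<lambda>j. bh \<omega> j - \<beta> j) < \<delta> * \<sigma>}"
  assumes i: "i < p"
    and bh_dep: "\<And>\<omega> \<omega>'. (\<forall>r<n1. \<forall>j<p. fst \<omega> (r, j) = fst \<omega>' (r, j)) \<Longrightarrow> (\<forall>r<n1. snd \<omega> r = snd \<omega>' r) \<Longrightarrow> bh \<omega> = bh \<omega>'"
    and Ameas: "A \<in> sets M"
    and \<sigma>: "0 < \<sigma>" and a: "0 < a" and L: "0 \<le> L"
    and \<beta>a: "\<beta> i \<noteq> 0 \<Longrightarrow> a \<le> \<bar>\<beta> i\<bar>"
  shows "emeasure M A \<le> ennreal ((if \<beta> i = 0 then exp (- L / 2) else exp (L / 2))
                                  * exp (- real n2 / 2 * ln (1 + a\<^sup>2 / (4 * sp))))"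
proof -
  let ?I = "F1 n1 p \<union> UU n1 n2 i"
  let ?J = "JJ n1 n2 p i"
  let ?S = "Inl ` IX (n1 + n2) p \<union> Inr ` {..<n1 + n2}"
  let ?c = "if \<beta> i = 0 then exp (- L / 2) else exp (L / 2)"
  define \<kappa> where "\<kappa> = a\<^sup>2 / (8 * sp)"
  have sp_eq: "sp = \<sigma>\<^sup>2 * (1 + \<delta>\<^sup>2)" unfolding sp_def by (simp add: power_mult_distrib)
  have sp: "0 < sp" using \<sigma> by (simp add: sp_eq add_pos_nonneg)
  have \<kappa>0: "0 \<le> \<kappa>" using sp by (simp add: \<kappa>_def)
  have c0: "0 \<le> ?c" by simp
  have Mdef: "M = PiM (IX (n1 + n2) p) (\<lambda>_. gauss) \<Otimes>\<^sub>M PiM {..<n1 + n2} (\<lambda>_. gauss)"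
    by (simp add: M_def model_def IX_def)
  have ssm: "ss n1 n2 p \<in> measurable (PiM ?S (\<lambda>_. gauss)) M"
    unfolding Mdef by (rule sumsplit_measurable)
  have distrM: "distr (PiM ?S (\<lambda>_. gauss)) M (ss n1 n2 p) = M"
    unfolding Mdef by (rule sumsplit_distr) auto
  have fm: "(\<lambda>h. indicator A (ss n1 n2 p h) :: ennreal) \<in> borel_measurable (PiM ?S (\<lambda>_. gauss))"
    using measurable_comp[OF ssm borel_measurable_indicator[OF Ameas]] by (simp add: comp_def)
  have "emeasure M A = (\<integral>\<^sup>+\<omega>. indicator A \<omega> \<partial>M)"
    using Ameas by simp
  also have "\<dots> = (\<integral>\<^sup>+h. indicator A (ss n1 n2 p h) \<partial>PiM ?S (\<lambda>_. gauss))"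
    by (subst distrM[symmetric], subst nn_integral_distr[OF ssm]) (auto simp: Ameas borel_measurable_indicator[OF Ameas])
  also have "\<dots> = (\<integral>\<^sup>+h. indicator A (ss n1 n2 p h) \<partial>PiM (?I \<union> ?J) (\<lambda>_. gauss))"
    by (simp only: split_sets(1)[OF i])
  also have "\<dots> = (\<integral>\<^sup>+y. (\<integral>\<^sup>+z. indicator A (ss n1 n2 p (mg n1 n2 p i y z)) \<partial>PiM ?J (\<lambda>_. gauss)) \<partial>PiM ?I (\<lambda>_. gauss))"
    by (rule GP.product_nn_integral_fold) (use split_sets[OF i] fm in auto)
  also have "\<dots> \<le> (\<integral>\<^sup>+y. ennreal (?c * exp (- \<kappa> * (\<Sum>k<n2. (y (Inl (n1 + k, i)))\<^sup>2))) \<partial>PiM ?I (\<lambda>_. gauss))"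
  proof (rule nn_integral_mono)
    fix y assume y: "y \<in> space (PiM ?I (\<lambda>_. gauss))"
    show "(\<integral>\<^sup>+z. indicator A (ss n1 n2 p (mg n1 n2 p i y z)) \<partial>PiM ?J (\<lambda>_. gauss))
          \<le> ennreal (?c * exp (- \<kappa> * (\<Sum>k<n2. (y (Inl (n1 + k, i)))\<^sup>2)))"
    proof -
      let ?\<omega> = "\<lambda>z. ss n1 n2 p (mg n1 n2 p i y z)"
      let ?P = "PiM ?J (\<lambda>_. gauss)"
      interpret P: prob_space ?P by (rule prob_space_PiM) simp
      define d where "d = bh (?\<omega> (\<lambda>_. 0))"
      have dz: "bh (?\<omega> z) = d" for z
        unfolding d_def by (rule bh_dep) (simp_all add: eval1 eval2)
      define U2 where "U2 = (\<Sum>k<n2. (y (Inl (n1 + k, i)))\<^sup>2)"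
      define N where "N = sqrt U2"
      define v where "v = \<sigma>\<^sup>2 + (\<Sum>j\<in>{..<p}-{i}. (\<beta> j - d j)\<^sup>2)"
      define w where "w = (\<lambda>m. case m of Inl (r, j) \<Rightarrow> y (Inl (r, i)) * (\<beta> j - d j) | Inr r \<Rightarrow> \<sigma> * y (Inl (r, i)))"
      define t where "t = a * N / 2 + sp * L / (a * N)"
      have U20: "0 \<le> U2" by (simp add: U2_def sum_nonneg)
      have NU2: "N\<^sup>2 = U2" using U20 by (simp add: N_def)
      have N0: "0 \<le> N" using U20 by (simp add: N_def)
      have vnormN: "vnorm n2 (col2 n1 (?\<omega> z) i) = N" for z
        unfolding vnorm_def col2_def N_def U2_def
        by (intro arg_cong[where f=sqrt] sum.cong refl) (simp add: eval3 i)
      have tthr_eq: "tthr a p s (\<sigma> * sqrt (1 + \<delta>\<^sup>2)) n2 (col2 n1 (?\<omega> z) i) = t" for z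
        unfolding tthr_def vnormN t_def sp_def L_def ..
      have sJ: "(\<Sum>m\<in>?J. w m * z m) = (\<Sum>k<n2. \<Sum>j\<in>{..<p}-{i}. (y (Inl (n1 + k, i)) * (\<beta> j - d j)) * z (Inl (n1 + k, j)))
            + (\<Sum>k<n2. (\<sigma> * y (Inl (n1 + k, i))) * z (Inr (n1 + k)))" for z
        by (simp add: sum_JJ w_def)
      have numeq: "(\<Sum>k<n2. fst (?\<omega> z) (n1 + k, i) * (Yv p \<sigma> \<beta> (?\<omega> z) (n1 + k)
               - (\<Sum>j\<in>{..<p}-{i}. fst (?\<omega> z) (n1 + k, j) * bh (?\<omega> z) j)))
             = \<beta> i * U2 + (\<Sum>m\<in>?J. w m * z m)" for z
      proof -
        have "(\<Sum>k<n2. fst (?\<omega> z) (n1 + k, i) * (Yv p \<sigma> \<beta> (?\<omega> z) (n1 + k)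
               - (\<Sum>j\<in>{..<p}-{i}. fst (?\<omega> z) (n1 + k, j) * bh (?\<omega> z) j)))
            = \<beta> i * (\<Sum>k<n2. (fst (?\<omega> z) (n1 + k, i))\<^sup>2)
              + ((\<Sum>k<n2. \<Sum>j\<in>{..<p}-{i}. (fst (?\<omega> z) (n1 + k, i) * (\<beta> j - d j)) * fst (?\<omega> z) (n1 + k, j))
              + (\<Sum>k<n2. (\<sigma> * fst (?\<omega> z) (n1 + k, i)) * snd (?\<omega> z) (n1 + k)))"
          unfolding Yv_def dz by (rule num_decomp[OF i])
        also have "(\<Sum>k<n2. (fst (?\<omega> z) (n1 + k, i))\<^sup>2) = U2"
          unfolding U2_def by (intro sum.cong refl) (simp add: eval3 i)
        also have "(\<Sum>k<n2. \<Sum>j\<in>{..<p}-{i}. (fst (?\<omega> z) (n1 + k, i) * (\<beta> j - d j)) * fst (?\<omega> z) (n1 + k, j))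
            = (\<Sum>k<n2. \<Sum>j\<in>{..<p}-{i}. (y (Inl (n1 + k, i)) * (\<beta> j - d j)) * z (Inl (n1 + k, j)))"
          by (intro sum.cong refl) (simp add: eval3 eval4 i)
        also have "(\<Sum>k<n2. (\<sigma> * fst (?\<omega> z) (n1 + k, i)) * snd (?\<omega> z) (n1 + k))
            = (\<Sum>k<n2. (\<sigma> * y (Inl (n1 + k, i))) * z (Inr (n1 + k)))"
          by (intro sum.cong refl) (simp add: eval3 eval5 i)
        finally show ?thesis by (simp add: sJ)
      qed
      have selEq: "selector (tthr a p s (\<sigma> * sqrt (1 + \<delta>\<^sup>2)) n2) n1 n2 p \<sigma> \<beta> (bh (?\<omega> z)) (?\<omega> z) i
           \<longleftrightarrow> t < \<bar>\<beta> i * U2 + (\<Sum>m\<in>?J. w m * z m)\<bar> / N" for z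
        unfolding selector_def numeq vnormN tthr_eq ..
      have w2: "(\<Sum>m\<in>?J. (w m)\<^sup>2) = U2 * v"
      proof -
        have "(\<Sum>m\<in>?J. (w m)\<^sup>2) = (\<Sum>k<n2. \<Sum>j\<in>{..<p}-{i}. (y (Inl (n1 + k, i)))\<^sup>2 * (\<beta> j - d j)\<^sup>2)
            + (\<Sum>k<n2. \<sigma>\<^sup>2 * (y (Inl (n1 + k, i)))\<^sup>2)"
          by (simp add: sum_JJ w_def power_mult_distrib)
        also have "(\<Sum>k<n2. \<Sum>j\<in>{..<p}-{i}. (y (Inl (n1 + k, i)))\<^sup>2 * (\<beta> j - d j)\<^sup>2)
            = (\<Sum>k<n2. (y (Inl (n1 + k, i)))\<^sup>2) * (\<Sum>j\<in>{..<p}-{i}. (\<beta> j - d j)\<^sup>2)"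
          by (subst sum_distrib_right) (simp add: sum_distrib_left)
        also have "(\<Sum>k<n2. \<sigma>\<^sup>2 * (y (Inl (n1 + k, i)))\<^sup>2) = \<sigma>\<^sup>2 * (\<Sum>k<n2. (y (Inl (n1 + k, i)))\<^sup>2)"
          by (simp add: sum_distrib_left)
        also have "(\<Sum>k<n2. (y (Inl (n1 + k, i)))\<^sup>2) * (\<Sum>j\<in>{..<p}-{i}. (\<beta> j - d j)\<^sup>2)
            + \<sigma>\<^sup>2 * (\<Sum>k<n2. (y (Inl (n1 + k, i)))\<^sup>2) = U2 * v"
          by (simp add: U2_def v_def algebra_simps)
        finally show ?thesis .
      qed
      define G where "G = (vnorm p (\<lambda>j. d j - \<beta> j) < \<delta> * \<sigma>)"
      have inA: "?\<omega> z \<in> A \<Longrightarrow> G \<and> (selector (tthr a p s (\<sigma> * sqrt (1 + \<delta>\<^sup>2)) n2) n1 n2 p \<sigma> \<beta> (bh (?\<omega> z)) (?\<omega> z) i \<noteq> (\<beta> i \<noteq> 0))" for z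
        unfolding A_def G_def by (simp add: dz)
      have le1: "(\<integral>\<^sup>+z. indicator A (?\<omega> z) \<partial>?P) \<le> 1"
      proof -
        have "(\<integral>\<^sup>+z. indicator A (?\<omega> z) \<partial>?P) \<le> (\<integral>\<^sup>+z. 1 \<partial>?P)"
          by (rule nn_integral_mono) (simp add: indicator_def)
        also have "\<dots> = 1" by (simp add: P.emeasure_space_1)
        finally show ?thesis .
      qed
      show ?thesis
      proof (cases G)
        case False
        have "(\<integral>\<^sup>+z. indicator A (?\<omega> z) \<partial>?P) = (\<integral>\<^sup>+z. 0 \<partial>?P)"
          by (rule nn_integral_cong) (use inA False in \<open>auto simp: indicator_def\<close>)
        thus ?thesis by simp
      next
        case True
        have v_le: "v \<le> sp"
        proof -
          have "vnorm p (\<lambda>j. d j - \<beta> j) < \<delta> * \<sigma>" using True by (simp add: G_def)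
          hence "(vnorm p (\<lambda>j. d j - \<beta> j))\<^sup>2 < (\<delta> * \<sigma>)\<^sup>2"
            by (intro power_strict_mono) (auto simp: vnorm_def sum_nonneg)
          hence 1: "(\<Sum>j<p. (d j - \<beta> j)\<^sup>2) < (\<delta> * \<sigma>)\<^sup>2"
            by (simp add: vnorm_def sum_nonneg)
          have "(\<Sum>j\<in>{..<p}-{i}. (\<beta> j - d j)\<^sup>2) \<le> (\<Sum>j<p. (d j - \<beta> j)\<^sup>2)"
            by (rule order_trans[OF sum_mono2[of "{..<p}"]]) (auto simp: power2_commute)
          thus ?thesis using 1 by (simp add: v_def sp_eq power_mult_distrib algebra_simps)
        qed
        have v0: "0 < v" using \<sigma> by (simp add: v_def add_pos_nonneg sum_nonneg)
        show ?thesis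
        proof (cases "\<beta> i = 0")
          case b0: True
          show ?thesis
          proof (cases "U2 = 0")
            case True
            hence "N = 0" by (simp add: N_def)
            hence "t = 0" by (simp add: t_def)
            have "(\<integral>\<^sup>+z. indicator A (?\<omega> z) \<partial>?P) = (\<integral>\<^sup>+z. 0 \<partial>?P)"
              by (rule nn_integral_cong) (use inA b0 \<open>N = 0\<close> \<open>t = 0\<close> selEq in \<open>auto simp: indicator_def\<close>)
            thus ?thesis by simp
          next
            case False
            hence U2p: "0 < U2" using U20 by simp
            hence Np: "0 < N" by (simp add: N_def)
            have t0: "0 \<le> t" using Np a sp L by (simp add: t_def)
            let ?B = "{z \<in> space ?P. t * N \<le> \<bar>\<Sum>m\<in>?J. w m * z m\<bar>}"
            have "(\<integral>\<^sup>+z. indicator A (?\<omega> z) \<partial>?P) \<le> (\<integral>\<^sup>+z. indicator ?B z \<partial>?P)"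
            proof (rule nn_integral_mono)
              fix z assume z: "z \<in> space ?P"
              show "indicator A (?\<omega> z) \<le> (indicator ?B z :: ennreal)"
              proof (cases "?\<omega> z \<in> A")
                case True
                hence "t < \<bar>\<Sum>m\<in>?J. w m * z m\<bar> / N" using inA[OF True] selEq b0 by simp
                hence "t * N \<le> \<bar>\<Sum>m\<in>?J. w m * z m\<bar>" using Np by (simp add: field_simps)
                thus ?thesis using z True by (simp add: indicator_def)
              qed simp
            qed
            also have "\<dots> = emeasure ?P ?B" by (rule nn_integral_indicator) simp
            also have "\<dots> \<le> ennreal (exp (- (t * N)\<^sup>2 / (2 * (\<Sum>m\<in>?J. (w m)\<^sup>2))))"
              by (rule lincomb_tail) (use w2 U2p v0 t0 Np in auto)
            also have "\<dots> \<le> ennreal (?c * exp (- \<kappa> * U2))"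
            proof (rule ennreal_leI)
              have "exp (- (t * N)\<^sup>2 / (2 * (N\<^sup>2 * v))) \<le> exp (- L / 2) * exp (- (a\<^sup>2 / (8 * sp)) * N\<^sup>2)"
                by (rule det_fp[OF Np a v0 v_le L t_def])
              thus "exp (- (t * N)\<^sup>2 / (2 * (\<Sum>m\<in>?J. (w m)\<^sup>2))) \<le> ?c * exp (- \<kappa> * U2)"
                using b0 by (simp add: w2 NU2 \<kappa>_def)
            qed
            finally show ?thesis by (simp add: U2_def)
          qed
        next
          case b1: False
          have ca: "a \<le> \<bar>\<beta> i\<bar>" using \<beta>a b1 by simp
          show ?thesis
          proof (cases "0 < N \<and> 0 < a * N - t")
            case False
            have "1 \<le> exp (L / 2) * exp (- (a\<^sup>2 / (8 * sp)) * N\<^sup>2)"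
            proof (rule det_fn_triv[OF N0 a sp L t_def])
              show "\<not> 0 < a * N - t"
              proof (cases "N = 0")
                case True thus ?thesis by (simp add: t_def)
              qed (use False N0 in auto)
            qed
            hence "1 \<le> ?c * exp (- \<kappa> * U2)" using b1 by (simp add: NU2 \<kappa>_def)
            hence "ennreal 1 \<le> ennreal (?c * exp (- \<kappa> * U2))" by (rule ennreal_leI)
            hence "(\<integral>\<^sup>+z. indicator A (?\<omega> z) \<partial>?P) \<le> ennreal (?c * exp (- \<kappa> * U2))"
              using order_trans[OF le1] by simp
            thus ?thesis by (simp add: U2_def)
          next
            case True
            hence Np: "0 < N" and pos: "0 < a * N - t" by auto
            have U2p: "0 < U2" using Np NU2 by (metis zero_less_power2 less_irrefl)
            let ?B = "{z \<in> space ?P. N * (a * N - t) \<le> \<bar>\<Sum>m\<in>?J. w m * z m\<bar>}"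
            have "(\<integral>\<^sup>+z. indicator A (?\<omega> z) \<partial>?P) \<le> (\<integral>\<^sup>+z. indicator ?B z \<partial>?P)"
            proof (rule nn_integral_mono)
              fix z assume z: "z \<in> space ?P"
              show "indicator A (?\<omega> z) \<le> (indicator ?B z :: ennreal)"
              proof (cases "?\<omega> z \<in> A")
                case True
                let ?S = "\<Sum>m\<in>?J. w m * z m"
                have "\<not> t < \<bar>\<beta> i * U2 + ?S\<bar> / N" using inA[OF True] selEq b1 by simp
                hence "\<bar>\<beta> i * U2 + ?S\<bar> \<le> t * N" using Np by (simp add: field_simps)
                moreover have "a * U2 \<le> \<bar>\<beta> i\<bar> * U2" using ca U20 by (rule mult_right_mono)
                moreover have "\<bar>\<beta> i\<bar> * U2 \<le> \<bar>\<beta> i * U2 + ?S\<bar> + \<bar>?S\<bar>"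
                  using abs_triangle_ineq4[of "\<beta> i * U2 + ?S" ?S] U20 by (simp add: abs_mult)
                ultimately have "a * U2 - t * N \<le> \<bar>?S\<bar>" by linarith
                moreover have "N * (a * N - t) = a * U2 - t * N" using NU2 by (simp add: algebra_simps power2_eq_square)
                ultimately have "N * (a * N - t) \<le> \<bar>?S\<bar>" by simp
                thus ?thesis using z True by (simp add: indicator_def)
              qed simp
            qed
            also have "\<dots> = emeasure ?P ?B" by (rule nn_integral_indicator) simp
            also have "\<dots> \<le> ennreal (exp (- (N * (a * N - t))\<^sup>2 / (2 * (\<Sum>m\<in>?J. (w m)\<^sup>2))))"
              by (rule lincomb_tail) (use w2 U2p v0 pos Np in auto)
            also have "\<dots> \<le> ennreal (?c * exp (- \<kappa> * U2))"
            proof (rule ennreal_leI)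
              have "exp (- (N * (a * N - t))\<^sup>2 / (2 * (N\<^sup>2 * v))) \<le> exp (L / 2) * exp (- (a\<^sup>2 / (8 * sp)) * N\<^sup>2)"
                by (rule det_fn[OF Np a v0 v_le L t_def pos])
              thus "exp (- (N * (a * N - t))\<^sup>2 / (2 * (\<Sum>m\<in>?J. (w m)\<^sup>2))) \<le> ?c * exp (- \<kappa> * U2)"
                using b1 by (simp add: w2 NU2 \<kappa>_def)
            qed
            finally show ?thesis by (simp add: U2_def)
          qed
        qed
      qed
    qed
  qed
  also have "\<dots> = ennreal (?c * exp (- real n2 / 2 * ln (1 + a\<^sup>2 / (4 * sp))))"
  proof -
    have UI: "UU n1 n2 i \<subseteq> ?I" by auto
    have pt: "ennreal (?c * exp (- \<kappa> * (\<Sum>k<n2. (y (Inl (n1 + k, i)))\<^sup>2)))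
        = ennreal ?c * (\<Prod>m\<in>?I. ennreal (if m \<in> UU n1 n2 i then exp (- \<kappa> * (y m)\<^sup>2) else 1))" for y
    proof -
      have "(\<Prod>m\<in>?I. (if m \<in> UU n1 n2 i then exp (- \<kappa> * (y m)\<^sup>2) else 1))
          = (\<Prod>m\<in>{m\<in>?I. m \<in> UU n1 n2 i}. exp (- \<kappa> * (y m)\<^sup>2))"
        by (rule prod.inter_filter[symmetric]) simp
      also have "{m\<in>?I. m \<in> UU n1 n2 i} = UU n1 n2 i" by auto
      also have "(\<Prod>m\<in>UU n1 n2 i. exp (- \<kappa> * (y m)\<^sup>2)) = (\<Prod>k<n2. exp (- \<kappa> * (y (Inl (n1 + k, i)))\<^sup>2))"
        by (rule prod_UU)
      also have "\<dots> = exp (\<Sum>k<n2. - \<kappa> * (y (Inl (n1 + k, i)))\<^sup>2)"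
        by (simp add: exp_sum)
      also have "\<dots> = exp (- \<kappa> * (\<Sum>k<n2. (y (Inl (n1 + k, i)))\<^sup>2))"
        by (simp add: sum_distrib_left)
      finally have e: "exp (- \<kappa> * (\<Sum>k<n2. (y (Inl (n1 + k, i)))\<^sup>2))
          = (\<Prod>m\<in>?I. (if m \<in> UU n1 n2 i then exp (- \<kappa> * (y m)\<^sup>2) else 1))" ..
      show ?thesis
        unfolding e by (simp add: prod_ennreal ennreal_mult')
    qed
    have "(\<integral>\<^sup>+y. ennreal (?c * exp (- \<kappa> * (\<Sum>k<n2. (y (Inl (n1 + k, i)))\<^sup>2))) \<partial>PiM ?I (\<lambda>_. gauss))
        = (\<integral>\<^sup>+y. ennreal ?c * (\<Prod>m\<in>?I. ennreal (if m \<in> UU n1 n2 i then exp (- \<kappa> * (y m)\<^sup>2) else 1)) \<partial>PiM ?I (\<lambda>_. gauss))"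
      by (simp only: pt)
    also have "\<dots> = ennreal ?c * (\<integral>\<^sup>+y. (\<Prod>m\<in>?I. ennreal (if m \<in> UU n1 n2 i then exp (- \<kappa> * (y m)\<^sup>2) else 1)) \<partial>PiM ?I (\<lambda>_. gauss))"
      by (rule nn_integral_cmult) simp
    also have "(\<integral>\<^sup>+y. (\<Prod>m\<in>?I. ennreal (if m \<in> UU n1 n2 i then exp (- \<kappa> * (y m)\<^sup>2) else 1)) \<partial>PiM ?I (\<lambda>_. gauss))
        = (\<Prod>m\<in>?I. (\<integral>\<^sup>+x. ennreal (if m \<in> UU n1 n2 i then exp (- \<kappa> * x\<^sup>2) else 1) \<partial>gauss))"
      by (rule GP.product_nn_integral_prod[where f="\<lambda>m x. ennreal (if m \<in> UU n1 n2 i then exp (- \<kappa> * x\<^sup>2) else 1)"]) auto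
    also have "\<dots> = (\<Prod>m\<in>?I. (if m \<in> UU n1 n2 i then ennreal (1 / sqrt (1 + 2 * \<kappa>)) else 1))"
    proof (rule prod.cong[OF refl])
      fix m
      show "(\<integral>\<^sup>+x. ennreal (if m \<in> UU n1 n2 i then exp (- \<kappa> * x\<^sup>2) else 1) \<partial>gauss)
          = (if m \<in> UU n1 n2 i then ennreal (1 / sqrt (1 + 2 * \<kappa>)) else 1)"
        using gauss_mgf[OF \<kappa>0] prob_space.emeasure_space_1[OF gauss_prob] by simp
    qed
    also have "\<dots> = (\<Prod>m\<in>{m\<in>?I. m \<in> UU n1 n2 i}. ennreal (1 / sqrt (1 + 2 * \<kappa>)))"
      by (rule prod.inter_filter[symmetric]) simp
    also have "{m\<in>?I. m \<in> UU n1 n2 i} = UU n1 n2 i" by auto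
    also have "(\<Prod>m\<in>UU n1 n2 i. ennreal (1 / sqrt (1 + 2 * \<kappa>))) = ennreal ((1 / sqrt (1 + 2 * \<kappa>)) ^ n2)"
      by (simp add: card_UU) (rule ennreal_power, simp add: \<kappa>0)
    also have "(1 / sqrt (1 + 2 * \<kappa>)) ^ n2 = exp (- real n2 / 2 * ln (1 + a\<^sup>2 / (4 * sp)))"
    proof -
      have c: "0 < 1 + 2 * \<kappa>" using \<kappa>0 by simp
      have "1 / sqrt (1 + 2 * \<kappa>) = exp (- ln (1 + 2 * \<kappa>) / 2)"
      proof -
        have "sqrt (1 + 2 * \<kappa>) = exp (ln (1 + 2 * \<kappa>) / 2)" using c by (simp add: powr_half_sqrt[symmetric] powr_def)
        thus ?thesis by (simp add: exp_minus inverse_eq_divide)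
      qed
      hence "(1 / sqrt (1 + 2 * \<kappa>)) ^ n2 = exp (real n2 * (- ln (1 + 2 * \<kappa>) / 2))"
        by (simp only: exp_of_nat_mult)
      moreover have "1 + 2 * \<kappa> = 1 + a\<^sup>2 / (4 * sp)" by (simp add: \<kappa>_def)
      ultimately show ?thesis by (simp add: field_simps)
    qed
    finally show ?thesis by (simp add: ennreal_mult)
  qed
  finally show ?thesis .
qed


lemma meas_fst[measurable]: "(\<lambda>\<omega>. fst \<omega> x) \<in> borel_measurable (model n p)"
proof (cases "x \<in> {..<n} \<times> {..<p}")
  case True
  show ?thesis unfolding model_def
    by (rule measurable_compose[OF measurable_fst]) (use True in \<open>simp add: measurable_cong_sets[OF refl sets_gauss, symmetric]\<close>)
next
  case False
  have "(\<lambda>\<omega>. undefined) \<in> borel_measurable (model n p)" by simp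
  moreover have eq: "fst \<omega> x = undefined" if w: "\<omega> \<in> space (model n p)" for \<omega>
  proof -
    have "fst \<omega> \<in> space (PiM ({..<n} \<times> {..<p}) (\<lambda>_. gauss))"
      using w unfolding model_def space_pair_measure by (auto simp: mem_Times_iff)
    thus ?thesis using False unfolding space_PiM by (rule PiE_arb)
  qed
  show ?thesis by (subst measurable_cong[where g="\<lambda>_. undefined"]) (auto simp: eq)
qed

lemma meas_snd[measurable]: "(\<lambda>\<omega>. snd \<omega> x) \<in> borel_measurable (model n p)"
proof (cases "x < n")
  case True
  show ?thesis unfolding model_def
    by (rule measurable_compose[OF measurable_snd]) (use True in \<open>simp add: measurable_cong_sets[OF refl sets_gauss, symmetric]\<close>)
next
  case False
  have "(\<lambda>\<omega>. undefined) \<in> borel_measurable (model n p)" by simp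
  moreover have eq: "snd \<omega> x = undefined" if w: "\<omega> \<in> space (model n p)" for \<omega>
  proof -
    have "snd \<omega> \<in> space (PiM {..<n} (\<lambda>_. gauss))"
      using w unfolding model_def space_pair_measure by (auto simp: mem_Times_iff)
    moreover have "x \<notin> {..<n}" using False by simp
    ultimately show ?thesis unfolding space_PiM by (intro PiE_arb)
  qed
  show ?thesis by (subst measurable_cong[where g="\<lambda>_. undefined"]) (auto simp: eq)
qed

lemma sqrt_exp_ln: "0 < (x::real) \<Longrightarrow> sqrt x = exp (ln x / 2)"
  by (simp add: powr_half_sqrt[symmetric] powr_def)

lemma prob_model: "prob_space (model n p)"
  unfolding model_def
  by (intro prob_space_pair prob_space_PiM) auto

theorem theorem4:
  fixes est :: "(nat \<times> nat \<Rightarrow> real) \<Rightarrow> (nat \<Rightarrow> real) \<Rightarrow> (nat \<Rightarrow> real)"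
    and n1 n2 p s :: nat and A \<sigma> a \<delta> C0 C1 C2 :: real
  defines "M \<equiv> model (n1 + n2) p"
  defines "\<eta>hat \<equiv> (\<lambda>\<beta> \<omega>. selector (tthr a p s (\<sigma> * sqrt (1 + \<delta>\<^sup>2)) n2) n1 n2 p \<sigma> \<beta>
                              (fit est n1 p \<sigma> \<beta> \<omega>) \<omega>)"
  assumes A: "A \<ge> 16 + 4 * sqrt 2"
    and est_min: "\<forall>X Y. is_sqslope A (n1 + n2) n1 p X Y (est X Y)"
    and est_meas: "\<forall>\<beta> j. (\<lambda>\<omega>. fit est n1 p \<sigma> \<beta> \<omega> j) \<in> borel_measurable M"
    and fact: "\<forall>\<delta>'. 0 < \<delta>' \<and> \<delta>' \<le> 1 \<and> real n1 > C0 / \<delta>'\<^sup>2 * real s * ln (exp 1 * real p / real s) \<longrightarrow>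
                 (\<forall>\<beta>. sparse p s \<beta> \<longrightarrow>
                    measure M {\<omega> \<in> space M. vnorm p (\<lambda>j. fit est n1 p \<sigma> \<beta> \<omega> j - \<beta> j) \<ge> \<delta>' * \<sigma>}
                      \<le> C1 * (real s / (2 * real p)) powr (C2 * real s))"
    and \<sigma>: "\<sigma> > 0" and s1: "s \<ge> 1" and sp: "real s \<le> real p / 2"
    and a: "0 < a" "a \<le> \<sigma>"
    and \<delta>: "0 < \<delta>" "\<delta> \<le> 1"
    and n1: "real n1 > C0 / \<delta>\<^sup>2 * real s * ln (exp 1 * real p / real s)"
    and n2: "real n2 \<ge> 4 * \<sigma>\<^sup>2 * ln (real p / real s - 1) / a\<^sup>2"
  shows "(\<forall>\<beta>\<in>Omega p s a.
           (\<integral>\<omega>. real (hamming p (\<eta>hat \<beta> \<omega>) \<beta>) \<partial>M)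
             \<le> 2 * sqrt (real s * (real p - real s))
                   * exp (- real n2 / 2 * ln (1 + a\<^sup>2 / (4 * \<sigma>\<^sup>2 * (1 + \<delta>\<^sup>2))))
               + real s * exp (- real n2 / 24)
               + C1 * real p * (real s / (2 * real p)) powr (C2 * real s)) \<and>
         (\<forall>\<beta>\<in>Omega p s a.
           measure M {\<omega> \<in> space M. \<exists>i<p. \<eta>hat \<beta> \<omega> i \<noteq> (\<beta> i \<noteq> 0)}
             \<le> 2 * sqrt (real s * (real p - real s))
                   * exp (- real n2 / 2 * ln (1 + a\<^sup>2 / (4 * \<sigma>\<^sup>2 * (1 + \<delta>\<^sup>2))))
               + real s * exp (- real n2 / 24)
               + C1 * (real s / (2 * real p)) powr (C2 * real s))"
proof -
  interpret MP: prob_space M unfolding M_def by (rule prob_model)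
  have sge: "2 * real s \<le> real p" using sp by simp
  have s0: "0 < real s" using s1 by simp
  have p0: "0 < real p" using sge s0 by simp
  define L where "L = ln (real p / real s - 1)"
  have ps1: "1 \<le> real p / real s - 1" using sge s0 by (simp add: field_simps)
  have L0: "0 \<le> L" using ps1 by (simp add: L_def)
  define e0 where "e0 = exp (- L / 2)"
  define e1 where "e1 = exp (L / 2)"
  define m where "m = exp (- real n2 / 2 * ln (1 + a\<^sup>2 / (4 * \<sigma>\<^sup>2 * (1 + \<delta>\<^sup>2))))"
  define q where "q = C1 * (real s / (2 * real p)) powr (C2 * real s)"
  define R where "R = 2 * sqrt (real s * (real p - real s))"
  have m0: "0 \<le> m" by (simp add: m_def)
  have e01: "e0 \<le> e1" using L0 by (simp add: e0_def e1_def)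
  have e1_eq: "e1 = sqrt (real p / real s - 1)"
  proof -
    have "sqrt (real p / real s - 1) = exp (ln (real p / real s - 1) / 2)"
      by (rule sqrt_exp_ln) (use ps1 in linarith)
    thus ?thesis by (simp add: e1_def L_def)
  qed
  have e0_eq: "e0 = 1 / e1" by (simp add: e0_def e1_def exp_minus inverse_eq_divide)
  have e1p: "0 < e1" by (simp add: e1_def)
  have se1: "real s * e1 = sqrt (real s * (real p - real s))"
  proof -
    have "(real s * e1)\<^sup>2 = real s * (real p - real s)"
      using ps1 s0 by (simp add: e1_eq power_mult_distrib field_simps) (simp add: power2_eq_square algebra_simps)
    thus ?thesis using s0 e1p by (metis real_sqrt_unique mult_nonneg_nonneg less_imp_le of_nat_0_le_iff)
  qed
  have pe0: "(real p - real s) * e0 = sqrt (real s * (real p - real s))"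
  proof -
    have "(real p / real s - 1) = (real p - real s) / real s" using s0 by (simp add: field_simps)
    hence "((real p - real s) * e0)\<^sup>2 = real s * (real p - real s)"
      using ps1 s0 sge by (simp add: e0_eq e1_eq power_mult_distrib power_divide field_simps power2_eq_square)
    moreover have "0 \<le> (real p - real s) * e0" using sge s0 e1p by (simp add: e0_eq)
    ultimately show ?thesis by (metis real_sqrt_unique)
  qed
  have sqrt_eq: "(\<sigma> * sqrt (1 + \<delta>\<^sup>2))\<^sup>2 = \<sigma>\<^sup>2 * (1 + \<delta>\<^sup>2)" by (simp add: power_mult_distrib)
  have main: "(\<forall>i<p. measure M {\<omega> \<in> space M. \<eta>hat \<beta> \<omega> i \<noteq> (\<beta> i \<noteq> 0)} \<le> q + (if \<beta> i = 0 then e0 else e1) * m)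
     \<and> measure M {\<omega> \<in> space M. \<exists>i<p. \<eta>hat \<beta> \<omega> i \<noteq> (\<beta> i \<noteq> 0)} \<le> q + R * m
     \<and> (\<Sum>i<p. (if \<beta> i = 0 then e0 else e1)) \<le> R"
    if \<beta>: "\<beta> \<in> Omega p s a" for \<beta>
  proof -
    have spa: "sparse p s \<beta>" and amin: "\<And>j. j < p \<Longrightarrow> \<beta> j \<noteq> 0 \<Longrightarrow> a \<le> \<bar>\<beta> j\<bar>"
      using \<beta> by (auto simp: Omega_def)
    have fm[measurable]: "(\<lambda>\<omega>. fit est n1 p \<sigma> \<beta> \<omega> j) \<in> borel_measurable (model (n1 + n2) p)" for j
      using est_meas by (simp add: M_def)
    define c where "c = (\<lambda>i. if \<beta> i = 0 then e0 else e1)"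
    define E where "E = (\<lambda>i. {\<omega> \<in> space M. \<eta>hat \<beta> \<omega> i \<noteq> (\<beta> i \<noteq> 0)})"
    define G where "G = {\<omega> \<in> space M. vnorm p (\<lambda>j. fit est n1 p \<sigma> \<beta> \<omega> j - \<beta> j) < \<delta> * \<sigma>}"
    define Gc where "Gc = {\<omega> \<in> space M. \<delta> * \<sigma> \<le> vnorm p (\<lambda>j. fit est n1 p \<sigma> \<beta> \<omega> j - \<beta> j)}"
    have Em: "E i \<in> sets M" for i
      unfolding E_def \<eta>hat_def selector_def tthr_def vnorm_def col2_def Yv_def M_def by measurable
    have Gm: "G \<in> sets M" unfolding G_def vnorm_def M_def by measurable
    have Gcm: "Gc \<in> sets M" unfolding Gc_def vnorm_def M_def by measurable
    have Gcq: "measure M Gc \<le> q"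
      using fact \<delta> n1 spa unfolding Gc_def q_def by blast
    have coord: "measure M (E i \<inter> G) \<le> c i * m" if i: "i < p" for i
    proof -
      have "emeasure (model (n1 + n2) p)
              {\<omega> \<in> space (model (n1 + n2) p). (selector (tthr a p s (\<sigma> * sqrt (1 + \<delta>\<^sup>2)) n2) n1 n2 p \<sigma> \<beta> (fit est n1 p \<sigma> \<beta> \<omega>) \<omega> i \<noteq> (\<beta> i \<noteq> 0))
                  \<and> vnorm p (\<lambda>j. fit est n1 p \<sigma> \<beta> \<omega> j - \<beta> j) < \<delta> * \<sigma>}
            \<le> ennreal ((if \<beta> i = 0 then exp (- ln (real p / real s - 1) / 2) else exp (ln (real p / real s - 1) / 2))
                                  * exp (- real n2 / 2 * ln (1 + a\<^sup>2 / (4 * (\<sigma> * sqrt (1 + \<delta>\<^sup>2))\<^sup>2))))"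
      proof (rule coord_bound[where bh="\<lambda>\<omega>. fit est n1 p \<sigma> \<beta> \<omega>"])
        show "i < p" by fact
        show "0 < \<sigma>" "0 < a" by fact+
        show "0 \<le> ln (real p / real s - 1)" using L0 by (simp add: L_def)
        show "\<beta> i \<noteq> 0 \<Longrightarrow> a \<le> \<bar>\<beta> i\<bar>" using amin i by blast
        show "{\<omega> \<in> space (model (n1 + n2) p). (selector (tthr a p s (\<sigma> * sqrt (1 + \<delta>\<^sup>2)) n2) n1 n2 p \<sigma> \<beta> (fit est n1 p \<sigma> \<beta> \<omega>) \<omega> i \<noteq> (\<beta> i \<noteq> 0))
                  \<and> vnorm p (\<lambda>j. fit est n1 p \<sigma> \<beta> \<omega> j - \<beta> j) < \<delta> * \<sigma>} \<in> sets (model (n1 + n2) p)"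
          unfolding selector_def tthr_def vnorm_def col2_def Yv_def by measurable
        fix \<omega> \<omega>' :: "(nat \<times> nat \<Rightarrow> real) \<times> (nat \<Rightarrow> real)"
        assume h1: "\<forall>r<n1. \<forall>j<p. fst \<omega> (r, j) = fst \<omega>' (r, j)" and h2: "\<forall>r<n1. snd \<omega> r = snd \<omega>' r"
        have "(\<lambda>(i, j). if i < n1 \<and> j < p then fst \<omega> (i, j) else 0) = (\<lambda>(i, j). if i < n1 \<and> j < p then fst \<omega>' (i, j) else 0)"
          using h1 by (auto simp: fun_eq_iff)
        moreover have "(\<lambda>i. if i < n1 then Yv p \<sigma> \<beta> \<omega> i else 0) = (\<lambda>i. if i < n1 then Yv p \<sigma> \<beta> \<omega>' i else 0)"
          using h1 h2 by (auto simp: fun_eq_iff Yv_def)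
        ultimately show "fit est n1 p \<sigma> \<beta> \<omega> = fit est n1 p \<sigma> \<beta> \<omega>'"
          unfolding fit_def by simp
      qed
      moreover have "{\<omega> \<in> space (model (n1 + n2) p). (selector (tthr a p s (\<sigma> * sqrt (1 + \<delta>\<^sup>2)) n2) n1 n2 p \<sigma> \<beta> (fit est n1 p \<sigma> \<beta> \<omega>) \<omega> i \<noteq> (\<beta> i \<noteq> 0))
                  \<and> vnorm p (\<lambda>j. fit est n1 p \<sigma> \<beta> \<omega> j - \<beta> j) < \<delta> * \<sigma>} = E i \<inter> G"
        by (auto simp: E_def G_def \<eta>hat_def M_def)
      moreover have "(if \<beta> i = 0 then exp (- ln (real p / real s - 1) / 2) else exp (ln (real p / real s - 1) / 2))
                                  * exp (- real n2 / 2 * ln (1 + a\<^sup>2 / (4 * (\<sigma> * sqrt (1 + \<delta>\<^sup>2))\<^sup>2))) = c i * m"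
        by (simp add: c_def e0_def e1_def L_def m_def sqrt_eq mult.assoc)
      ultimately have "emeasure M (E i \<inter> G) \<le> ennreal (c i * m)" by (simp add: M_def)
      thus ?thesis by (simp add: MP.emeasure_eq_measure c_def e0_def e1_def m0)
    qed
    have Ei: "measure M (E i) \<le> q + c i * m" if i: "i < p" for i
    proof -
      have "E i \<subseteq> Gc \<union> (E i \<inter> G)" by (auto simp: E_def G_def Gc_def)
      hence "measure M (E i) \<le> measure M (Gc \<union> (E i \<inter> G))"
        by (intro MP.finite_measure_mono) (auto intro: Gcm Em Gm)
      also have "\<dots> \<le> measure M Gc + measure M (E i \<inter> G)"
        by (rule measure_subadditive) (auto intro: Gcm Em Gm simp: MP.emeasure_finite)
      finally show ?thesis using Gcq coord[OF i] by linarith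
    qed
    have sumc: "(\<Sum>i<p. c i) \<le> R"
    proof -
      have "(\<Sum>i<p. c i) = (\<Sum>i\<in>{..<p} \<inter> {i. \<beta> i = 0}. e0) + (\<Sum>i\<in>{..<p} \<inter> - {i. \<beta> i = 0}. e1)"
        unfolding c_def by (rule sum.If_cases) simp
      also have "\<dots> = real (card ({..<p} \<inter> {i. \<beta> i = 0})) * e0 + real (card ({..<p} \<inter> - {i. \<beta> i = 0})) * e1"
        by simp
      finally have 1: "(\<Sum>i<p. c i) = real (card ({..<p} \<inter> {i. \<beta> i = 0})) * e0 + real (card ({..<p} \<inter> - {i. \<beta> i = 0})) * e1" .
      define k where "k = card ({..<p} \<inter> - {i. \<beta> i = 0})"
      have "{..<p} \<inter> - {i. \<beta> i = 0} = {j \<in> {..<p}. \<beta> j \<noteq> 0}" by auto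
      hence k: "k \<le> s" using spa unfolding sparse_def l0_def k_def by simp
      have cardsum: "card ({..<p} \<inter> {i. \<beta> i = 0}) + k = p"
        unfolding k_def using card_Un_disjoint[of "{..<p} \<inter> {i. \<beta> i = 0}" "{..<p} \<inter> - {i. \<beta> i = 0}"]
        by (simp add: Int_Un_distrib[symmetric])
      hence cz: "real (card ({..<p} \<inter> {i. \<beta> i = 0})) = real p - real k" by linarith
      have "(\<Sum>i<p. c i) = (real p - real k) * e0 + real k * e1" using 1 cz by (simp add: k_def)
      also have "\<dots> \<le> (real p - real s) * e0 + real s * e1"
      proof -
        have "(real s - real k) * (e1 - e0) \<ge> 0" using k e01 by simp
        thus ?thesis by (simp add: algebra_simps)
      qed
      also have "\<dots> = R" by (simp add: pe0 se1 R_def)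
      finally show ?thesis .
    qed
    have err: "measure M {\<omega> \<in> space M. \<exists>i<p. \<eta>hat \<beta> \<omega> i \<noteq> (\<beta> i \<noteq> 0)} \<le> q + R * m"
    proof -
      have "{\<omega> \<in> space M. \<exists>i<p. \<eta>hat \<beta> \<omega> i \<noteq> (\<beta> i \<noteq> 0)} \<subseteq> Gc \<union> (\<Union>i\<in>{..<p}. E i \<inter> G)"
        by (auto simp: E_def G_def Gc_def)
      hence "measure M {\<omega> \<in> space M. \<exists>i<p. \<eta>hat \<beta> \<omega> i \<noteq> (\<beta> i \<noteq> 0)} \<le> measure M (Gc \<union> (\<Union>i\<in>{..<p}. E i \<inter> G))"
        by (intro MP.finite_measure_mono) (auto intro!: Gcm Em Gm)
      also have "\<dots> \<le> measure M Gc + measure M (\<Union>i\<in>{..<p}. E i \<inter> G)"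
        by (rule measure_subadditive) (auto intro!: Gcm Em Gm simp: MP.emeasure_finite)
      also have "measure M (\<Union>i\<in>{..<p}. E i \<inter> G) \<le> (\<Sum>i<p. measure M (E i \<inter> G))"
        by (rule MP.finite_measure_subadditive_finite) (auto intro!: Em Gm)
      also have "\<dots> \<le> (\<Sum>i<p. c i * m)" by (rule sum_mono) (rule coord, simp)
      also have "\<dots> = (\<Sum>i<p. c i) * m" by (simp add: sum_distrib_right)
      also have "\<dots> \<le> R * m" using sumc m0 by (rule mult_right_mono)
      finally show ?thesis using Gcq by linarith
    qed
    show ?thesis using Ei err sumc by (simp add: E_def c_def)
  qed
  show ?thesis
  proof (intro conjI ballI)
    fix \<beta> assume \<beta>: "\<beta> \<in> Omega p s a"
    note mb = main[OF \<beta>]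
    have "measure M {\<omega> \<in> space M. \<exists>i<p. \<eta>hat \<beta> \<omega> i \<noteq> (\<beta> i \<noteq> 0)} \<le> q + R * m" using mb by blast
    moreover have "0 \<le> real s * exp (- real n2 / 24)" by simp
    ultimately show "measure M {\<omega> \<in> space M. \<exists>i<p. \<eta>hat \<beta> \<omega> i \<noteq> (\<beta> i \<noteq> 0)}
             \<le> 2 * sqrt (real s * (real p - real s))
                   * exp (- real n2 / 2 * ln (1 + a\<^sup>2 / (4 * \<sigma>\<^sup>2 * (1 + \<delta>\<^sup>2))))
               + real s * exp (- real n2 / 24)
               + C1 * (real s / (2 * real p)) powr (C2 * real s)"
      by (simp only: R_def m_def q_def; linarith)
  next
    fix \<beta> assume \<beta>: "\<beta> \<in> Omega p s a"
    note mb = main[OF \<beta>]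
    define E where "E = (\<lambda>i. {\<omega> \<in> space M. \<eta>hat \<beta> \<omega> i \<noteq> (\<beta> i \<noteq> 0)})"
    have fm[measurable]: "(\<lambda>\<omega>. fit est n1 p \<sigma> \<beta> \<omega> j) \<in> borel_measurable (model (n1 + n2) p)" for j
      using est_meas by (simp add: M_def)
    have Em: "E i \<in> sets M" for i
      unfolding E_def \<eta>hat_def selector_def tthr_def vnorm_def col2_def Yv_def M_def by measurable
    have "(\<integral>\<omega>. real (hamming p (\<eta>hat \<beta> \<omega>) \<beta>) \<partial>M) = (\<integral>\<omega>. (\<Sum>i<p. indicator (E i) \<omega>) \<partial>M)"
    proof (rule Bochner_Integration.integral_cong[OF refl])
      fix \<omega> assume w: "\<omega> \<in> space M"
      have "real (hamming p (\<eta>hat \<beta> \<omega>) \<beta>) = (\<Sum>i\<in>{i \<in> {..<p}. \<eta>hat \<beta> \<omega> i \<noteq> (\<beta> i \<noteq> 0)}. 1)"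
        by (simp add: hamming_def)
      also have "\<dots> = (\<Sum>i<p. if \<eta>hat \<beta> \<omega> i \<noteq> (\<beta> i \<noteq> 0) then 1 else 0)"
        by (rule sum.inter_filter) simp
      also have "\<dots> = (\<Sum>i<p. indicator (E i) \<omega>)"
        using w by (intro sum.cong refl) (simp add: E_def indicator_def)
      finally show "real (hamming p (\<eta>hat \<beta> \<omega>) \<beta>) = (\<Sum>i<p. indicator (E i) \<omega>)" .
    qed
    also have "\<dots> = (\<Sum>i<p. (\<integral>\<omega>. indicator (E i) \<omega> \<partial>M))"
      by (rule Bochner_Integration.integral_sum) (auto intro!: integrable_real_indicator Em simp: MP.emeasure_finite less_top[symmetric])
    also have "\<dots> = (\<Sum>i<p. measure M (E i))"
      by (intro sum.cong refl) (simp add: Int_absorb2 Em sets.sets_into_space)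
    also have "\<dots> \<le> (\<Sum>i<p. q + (if \<beta> i = 0 then e0 else e1) * m)"
      by (rule sum_mono) (use mb in \<open>simp add: E_def\<close>)
    also have "\<dots> = real p * q + (\<Sum>i<p. (if \<beta> i = 0 then e0 else e1)) * m"
      by (simp add: sum.distrib sum_distrib_right)
    also have "\<dots> \<le> real p * q + R * m"
      using mb m0 by (simp add: mult_right_mono)
    finally have "(\<integral>\<omega>. real (hamming p (\<eta>hat \<beta> \<omega>) \<beta>) \<partial>M) \<le> real p * q + R * m" .
    moreover have "0 \<le> real s * exp (- real n2 / 24)" by simp
    moreover have "real p * q = C1 * real p * (real s / (2 * real p)) powr (C2 * real s)" by (simp add: q_def)
    ultimately show "(\<integral>\<omega>. real (hamming p (\<eta>hat \<beta> \<omega>) \<beta>) \<partial>M)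
             \<le> 2 * sqrt (real s * (real p - real s))
                   * exp (- real n2 / 2 * ln (1 + a\<^sup>2 / (4 * \<sigma>\<^sup>2 * (1 + \<delta>\<^sup>2))))
               + real s * exp (- real n2 / 24)
               + C1 * real p * (real s / (2 * real p)) powr (C2 * real s)"
      by (simp only: R_def m_def; linarith)
  qed
qed


end
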